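(* Let $\mathcal{F}$ be a $T$-equivariant rank 2 $\mu$-stable reflexive sheaf on $\mathbb{P}^3$ with Chern classes $c_1,c_2,c_3$ (as integers) and toric data $\{(u_i,v_i,p_i)\}_{i=1,\dots,4}$. Then: (i) $c_3\equiv c_1c_2\pmod 2$; (ii) if $c_1\in\{-1,0\}$ then $c_2>0$; (iii) if $c_1=-1$ then $0\le c_3\le c_2^2$, and if $c_1=0$ then $0\le c_3\le c_2^2-c_2+2$. If $c_1=-1$, then $c_3=c_2^2$ if and only if one of the following holds: (a) there exist $\{i,j,k,l\}=\{1,2,3,4\}$ with $p_i=p_j$, $p_j,p_k,p_l$ mutually distinct, $v_i\ge1$, $v_j\ge1$, $v_k=1$, and $v_i+v_j=v_l$; (b) there exist $\{i,j,k,l\}=\{1,2,3,4\}$ with $v_i=0$, $p_j,p_k,p_l$ mutually distinct, $v_j=1$, and $v_k=v_l\ge1$. If $c_1=0$, then $c_3=c_2^2-c_2+2$ if and only if one of the following holds: (a) $p_1,p_2,p_3,p_4$ are mutually distinct and $v_1=v_2=v_3=v_4=1$; (b) there exist $\{i,j,k,l\}=\{1,2,3,4\}$ with $p_i=p_j$, $p_j,p_k,p_l$ mutually distinct, $v_i=v_j=1$ and $v_k=v_l=2$; (c) there exist $\{i,j,k,l\}=\{1,2,3,4\}$ with $v_i=0$, $p_j,p_k,p_l$ mutually distinct, and $v_j=v_k=v_l=2$.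
   Context: $T=(\mathbb{C}^* )^3$ is the dense open torus of $\mathbb{P}^3$; $\mathbb{P}^3$ is the toric variety of the fan in $\mathbb{Z}^3$ with rays $\rho_1,\dots,\rho_4$ generated by $n_1=e_1,n_2=e_2,n_3=e_3,n_4=-e_1-e_2-e_3$. By Klyachko's description, a $T$-equivariant rank 2 reflexive sheaf is given by four increasing filtrations $\{V^{\rho_i}(\lambda)\}_{\lambda\in\mathbb{Z}}$ of $\mathbb{C}^2$ (zero for $\lambda\ll0$, all of $\mathbb{C}^2$ for $\lambda\gg0$), the weight-$m$ sections over the chart of the cone spanned by $\rho_a,\rho_b,\rho_c$ being $V^{\rho_a}(\langle m,n_a\rangle)\cap V^{\rho_b}(\langle m,n_b\rangle)\cap V^{\rho_c}(\langle m,n_c\rangle)$; with these conventions a line bundle with jumps at $u_1,\dots,u_4$ has $c_1=-(u_1+\dots+u_4)H$. The toric data are the unique $u_i\in\mathbb{Z}$, $v_i\in\mathbb{Z}_{\ge0}$, $p_i\in\mathbb{P}^1=\mathrm{Gr}(1,\mathbb{C}^2)$ with $V^{\rho_i}(\lambda)=0$ for $\lambda<u_i$, $=p_i$ for $u_i\le\lambda<u_i+v_i$, $=\mathbb{C}^2$ for $\lambda\ge u_i+v_i$ (if $v_i=0$, $p_i$ does not occur). Stability is with respect to $\mathcal{O}(1)$; Chern classes are integers via $H^{2i}(\mathbb{P}^3,\mathbb{Z})=\mathbb{Z}H^i$, $H$ the hyperplane class. "There exist $\{i,j,k,l\}=\{1,2,3,4\}$" means for some ordering $i,j,k,l$ of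 the four indices. *)

theory Defs
  imports Complex_Main
begin

text \<open>Vectors of C^2 are pairs of complex numbers; the rays of the fan of P^3 are indexed 1..4.\<close>

type_synonym vec2 = "complex \<times> complex"

definition czero :: vec2 where "czero = (0, 0)"

definition csubspace :: "vec2 set \<Rightarrow> bool" where
  "csubspace S \<longleftrightarrow> czero \<in> S \<and>
     (\<forall>x\<in>S. \<forall>y\<in>S. (fst x + fst y, snd x + snd y) \<in> S) \<and>
     (\<forall>c::complex. \<forall>x\<in>S. (c * fst x, c * snd x) \<in> S)"

definition cline :: "vec2 \<Rightarrow> vec2 set" where
  "cline w = {(c * fst w, c * snd w) | c. True}"

definition is_P1_point :: "vec2 set \<Rightarrow> bool" where
  "is_P1_point L \<longleftrightarrow> (\<exists>w. w \<noteq> czero \<and> L = cline w)"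

text \<open>Complex dimension of a complex subspace of C^2 (only used on subspaces).\<close>
definition cdim :: "vec2 set \<Rightarrow> nat" where
  "cdim S = (if S = {czero} then 0 else if S = UNIV then 2 else 1)"

text \<open>Klyachko data of a T-equivariant rank 2 reflexive sheaf on P^3: four increasing
  filtrations of C^2 by complex subspaces, zero for small and everything for large index.\<close>
definition klyachko_filtrations :: "(nat \<Rightarrow> int \<Rightarrow> vec2 set) \<Rightarrow> bool" where
  "klyachko_filtrations V \<longleftrightarrow> (\<forall>i\<in>{1..4::nat}.
      (\<forall>l. csubspace (V i l)) \<and> (\<forall>l l'. l \<le> l' \<longrightarrow> V i l \<subseteq> V i l') \<and>
      (\<exists>a. \<forall>l<a. V i l = {czero}) \<and> (\<exists>b. \<forall>l\<ge>b. V i l = UNIV))"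

definition pairing :: "int \<times> int \<times> int \<Rightarrow> nat \<Rightarrow> int" where
  "pairing m i = (case m of (m1, m2, m3) \<Rightarrow>
      if i = 1 then m1 else if i = 2 then m2 else if i = 3 then m3 else - m1 - m2 - m3)"

text \<open>Filtrations of F(t) = F \<otimes> O(t D_4).\<close>
definition twist :: "(nat \<Rightarrow> int \<Rightarrow> vec2 set) \<Rightarrow> int \<Rightarrow> nat \<Rightarrow> int \<Rightarrow> vec2 set" where
  "twist V t i l = (if i = 4 then V i (l + t) else V i l)"

definition sections_dim :: "(nat \<Rightarrow> int \<Rightarrow> vec2 set) \<Rightarrow> int \<times> int \<times> int \<Rightarrow> nat" where
  "sections_dim V m = cdim (\<Inter>i\<in>{1..4::nat}. V i (pairing m i))"

definition h0 :: "(nat \<Rightarrow> int \<Rightarrow> vec2 set) \<Rightarrow> nat" where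
  "h0 V = (\<Sum>m\<in>{m. sections_dim V m \<noteq> 0}. sections_dim V m)"

definition hilbert :: "(nat \<Rightarrow> int \<Rightarrow> vec2 set) \<Rightarrow> int \<Rightarrow> nat" where
  "hilbert V t = h0 (twist V t)"

text \<open>Chern classes via Serre vanishing and Riemann-Roch for rank 2 reflexive sheaves on P^3
  (Hartshorne): for t large, chi(F(t)) = h^0(F(t)) =
  (c1'^3 - 3 c1' c2' + 3 c3)/6 + (c1'^2 - 2 c2') + 11 c1'/6 + 2,
  where c1' = c1 + 2t, c2' = c2 + c1 t + t^2 are the Chern classes of F(t).\<close>
definition has_chern_classes :: "(nat \<Rightarrow> int \<Rightarrow> vec2 set) \<Rightarrow> int \<Rightarrow> int \<Rightarrow> int \<Rightarrow> bool" where
  "has_chern_classes V c1 c2 c3 \<longleftrightarrow> (\<exists>T. \<forall>t\<ge>T.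
     (let a = c1 + 2 * t; b = c2 + c1 * t + t^2 in
      6 * int (hilbert V t) = a^3 - 3 * a * b + 3 * c3 + 6 * (a^2 - 2 * b) + 11 * a + 12))"

text \<open>First Chern class of the rank 1 equivariant subsheaf with filtrations W \<inter> V_i
  (a line bundle with jumps at the least index where W \<inter> V_i is nonzero).\<close>
definition sub_c1 :: "(nat \<Rightarrow> int \<Rightarrow> vec2 set) \<Rightarrow> vec2 set \<Rightarrow> int" where
  "sub_c1 V W = - (\<Sum>i\<in>{1..4::nat}. (LEAST l. W \<inter> V i l \<noteq> {czero}))"

text \<open>mu-stability w.r.t. O(1), tested on equivariant saturated rank 1 subsheaves:
  mu(F_W) = c1(F_W) < mu(F) = c1(F)/2.\<close>
definition mu_stable :: "(nat \<Rightarrow> int \<Rightarrow> vec2 set) \<Rightarrow> bool" where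
  "mu_stable V \<longleftrightarrow> (\<forall>W c1 c2 c3. is_P1_point W \<and> has_chern_classes V c1 c2 c3 \<longrightarrow>
      2 * sub_c1 V W < c1)"

definition toric_data ::
  "(nat \<Rightarrow> int \<Rightarrow> vec2 set) \<Rightarrow> (nat \<Rightarrow> int) \<Rightarrow> (nat \<Rightarrow> nat) \<Rightarrow> (nat \<Rightarrow> vec2 set) \<Rightarrow> bool" where
  "toric_data V u v p \<longleftrightarrow> (\<forall>i\<in>{1..4::nat}.
     (\<forall>l. V i l = (if l < u i then {czero} else if l < u i + int (v i) then p i else UNIV)) \<and>
     (0 < v i \<longrightarrow> is_P1_point (p i)))"

definition is_ordering4 :: "nat \<Rightarrow> nat \<Rightarrow> nat \<Rightarrow> nat \<Rightarrow> bool" where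
  "is_ordering4 i j k l \<longleftrightarrow> distinct [i, j, k, l] \<and> {i, j, k, l} = {1, 2, 3, 4}"

end

theory Submission
  imports Defs
begin

lemma tri_odd_poly: fixes X Y Z :: int shows
 "(X*Y+Y*Z+Z*X+X+Y+Z+1)^2 - (Y+Z+1)*(X+Z+1)*(X+Y+1) = X*Y + Y*Z + Z*X + (Y*Z^2 + Y^2*Z + Y^2*Z^2 + X*Z^2 + 4*X*Y*Z + 2*X*Y*Z^2 + X*Y^2 + 2*X*Y^2*Z + X^2*Z + X^2*Z^2 + X^2*Y + 2*X^2*Y*Z + X^2*Y^2)"
  by algebra

lemma tri_even_poly: fixes p q r :: int shows
 "((p+1)*(q+1)+(q+1)*(r+1)+(r+1)*(p+1))^2 - ((p+1)*(q+1)+(q+1)*(r+1)+(r+1)*(p+1)) + 2 - (q+r+2)*(p+r+2)*(p+q+2)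
  = 2*p + 2*q + 2*r + (2*r^2 + 7*q*r + 3*q*r^2 + 2*q^2 + 3*q^2*r + q^2*r^2 + 7*p*r + 3*p*r^2 + 7*p*q + 10*p*q*r + 2*p*q*r^2 + 3*p*q^2 + 2*p*q^2*r + 2*p^2 + 3*p^2*r + p^2*r^2 + 3*p^2*q + 2*p^2*q*r + p^2*q^2)"
  by algebra

lemma tri_param_odd:
  fixes a b c :: int
  assumes "2*a < a+b+c" "2*b < a+b+c" "2*c < a+b+c" "odd (a+b+c)"
  obtains X Y Z where "X \<ge> 0" "Y \<ge> 0" "Z \<ge> 0" "a = Y+Z+1" "b = X+Z+1" "c = X+Y+1"
proof -
  have "odd (b+c-a)" using assms(4) by (metis add_diff_cancel_left' diff_diff_eq2 even_diff mult_2 add.commute)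
  then obtain X where X: "b+c-a = 2*X+1" by (metis oddE)
  have "odd (a+c-b)" using assms(4) by (metis add_diff_cancel_left' diff_diff_eq2 even_diff mult_2 add.commute add.left_commute)
  then obtain Y where Y: "a+c-b = 2*Y+1" by (metis oddE)
  have "odd (a+b-c)" using assms(4) by (metis add_diff_cancel_left' diff_diff_eq2 even_diff mult_2 add.commute add.left_commute)
  then obtain Z where Z: "a+b-c = 2*Z+1" by (metis oddE)
  show ?thesis by (rule that[of X Y Z]) (use X Y Z assms in linarith)+
qed

lemma tri_param_even:
  fixes a b c :: int
  assumes "2*a < a+b+c" "2*b < a+b+c" "2*c < a+b+c" "even (a+b+c)"
  obtains X Y Z where "X \<ge> 1" "Y \<ge> 1" "Z \<ge> 1" "a = Y+Z" "b = X+Z" "c = X+Y"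
proof -
  have "even (b+c-a)" using assms(4) by (metis add_diff_cancel_left' diff_diff_eq2 even_diff mult_2 add.commute)
  then obtain X where X: "b+c-a = 2*X" by (metis evenE)
  have "even (a+c-b)" using assms(4) by (metis add_diff_cancel_left' diff_diff_eq2 even_diff mult_2 add.commute add.left_commute)
  then obtain Y where Y: "a+c-b = 2*Y" by (metis evenE)
  have "even (a+b-c)" using assms(4) by (metis add_diff_cancel_left' diff_diff_eq2 even_diff mult_2 add.commute add.left_commute)
  then obtain Z where Z: "a+b-c = 2*Z" by (metis evenE)
  show ?thesis by (rule that[of X Y Z]) (use X Y Z assms in linarith)+
qed

lemma tri_odd:
  fixes a b c k :: int
  assumes "2*a < a+b+c" "2*b < a+b+c" "2*c < a+b+c" "odd (a+b+c)"
    and k: "4*k = (a+b+c)^2 + 1 - 2*(a^2+b^2+c^2)"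
  shows "a*b*c \<le> k^2 \<and> (a*b*c = k^2 \<longleftrightarrow> (a=1 \<and> b=c) \<or> (b=1 \<and> a=c) \<or> (c=1 \<and> a=b))"
proof -
  obtain X Y Z where XYZ: "X \<ge> 0" "Y \<ge> 0" "Z \<ge> 0" "a = Y+Z+1" "b = X+Z+1" "c = X+Y+1"
    using tri_param_odd[OF assms(1-4)] by blast
  have "4*k = 4*(X*Y+Y*Z+Z*X+X+Y+Z+1)" using k unfolding XYZ by algebra
  hence kk: "k = X*Y+Y*Z+Z*X+X+Y+Z+1" by simp
  define G where "G = Y*Z^2 + Y^2*Z + Y^2*Z^2 + X*Z^2 + 4*X*Y*Z + 2*X*Y*Z^2 + X*Y^2 + 2*X*Y^2*Z + X^2*Z + X^2*Z^2 + X^2*Y + 2*X^2*Y*Z + X^2*Y^2"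
  have G0: "G \<ge> 0" unfolding G_def using XYZ by (simp add: add_nonneg_nonneg mult_nonneg_nonneg)
  have eq: "k^2 - a*b*c = X*Y + Y*Z + Z*X + G" unfolding kk XYZ G_def by (rule tri_odd_poly)
  have p: "X*Y \<ge> 0" "Y*Z \<ge> 0" "Z*X \<ge> 0" using XYZ by auto
  have "a*b*c = k^2 \<longleftrightarrow> X*Y = 0 \<and> Y*Z = 0 \<and> Z*X = 0"
  proof
    assume "a*b*c = k^2" thus "X*Y = 0 \<and> Y*Z = 0 \<and> Z*X = 0" using eq p G0 by linarith
  next
    assume "X*Y = 0 \<and> Y*Z = 0 \<and> Z*X = 0"
    hence "G = 0" unfolding G_def by (auto simp: power2_eq_square)
    thus "a*b*c = k^2" using eq \<open>X*Y = 0 \<and> Y*Z = 0 \<and> Z*X = 0\<close> by linarith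
  qed
  also have "\<dots> \<longleftrightarrow> (a=1 \<and> b=c) \<or> (b=1 \<and> a=c) \<or> (c=1 \<and> a=b)"
    unfolding XYZ using XYZ(1-3) by auto
  finally show ?thesis using eq p G0 by linarith
qed

lemma tri_even:
  fixes a b c k :: int
  assumes "2*a < a+b+c" "2*b < a+b+c" "2*c < a+b+c" "even (a+b+c)"
    and k: "4*k = (a+b+c)^2 - 2*(a^2+b^2+c^2)"
  shows "a*b*c \<le> k^2 - k + 2 \<and> (a*b*c = k^2 - k + 2 \<longleftrightarrow> a=2 \<and> b=2 \<and> c=2)"
proof -
  obtain X Y Z where XYZ: "X \<ge> 1" "Y \<ge> 1" "Z \<ge> 1" "a = Y+Z" "b = X+Z" "c = X+Y"
    using tri_param_even[OF assms(1-4)] by blast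
  define p q r where "p = X - 1" "q = Y - 1" "r = Z - 1"
  have pqr: "p \<ge> 0" "q \<ge> 0" "r \<ge> 0" "X = p+1" "Y = q+1" "Z = r+1" using XYZ unfolding p_q_r_def by auto
  have ab: "a = q+r+2" "b = p+r+2" "c = p+q+2" using XYZ pqr by auto
  have "4*k = 4*((p+1)*(q+1)+(q+1)*(r+1)+(r+1)*(p+1))" using k unfolding ab by algebra
  hence kk: "k = (p+1)*(q+1)+(q+1)*(r+1)+(r+1)*(p+1)" by simp
  define G where "G = 2*r^2 + 7*q*r + 3*q*r^2 + 2*q^2 + 3*q^2*r + q^2*r^2 + 7*p*r + 3*p*r^2 + 7*p*q + 10*p*q*r + 2*p*q*r^2 + 3*p*q^2 + 2*p*q^2*r + 2*p^2 + 3*p^2*r + p^2*r^2 + 3*p^2*q + 2*p^2*q*r + p^2*q^2"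
  have G0: "G \<ge> 0" unfolding G_def using pqr by (simp add: add_nonneg_nonneg mult_nonneg_nonneg)
  have eq: "k^2 - k + 2 - a*b*c = 2*p + 2*q + 2*r + G" unfolding kk ab G_def by (rule tri_even_poly)
  have "a*b*c = k^2 - k + 2 \<longleftrightarrow> p = 0 \<and> q = 0 \<and> r = 0"
  proof
    assume "a*b*c = k^2 - k + 2" thus "p = 0 \<and> q = 0 \<and> r = 0" using eq pqr G0 by linarith
  next
    assume "p = 0 \<and> q = 0 \<and> r = 0"
    hence "G = 0" unfolding G_def by auto
    thus "a*b*c = k^2 - k + 2" using eq \<open>p = 0 \<and> q = 0 \<and> r = 0\<close> by linarith
  qed
  also have "\<dots> \<longleftrightarrow> a=2 \<and> b=2 \<and> c=2" unfolding ab using pqr by auto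
  finally show ?thesis using eq pqr G0 by linarith
qed

lemma tri_odd_le: fixes X Y Z :: int assumes "X \<ge> 0" "Y \<ge> 0" "Z \<ge> 0"
  shows "(Y+Z+1)*(X+Z+1)*(X+Y+1) \<le> (X*Y+Y*Z+Z*X+X+Y+Z+1)^2"
proof -
  have G0: "Y*Z^2 + Y^2*Z + Y^2*Z^2 + X*Z^2 + 4*X*Y*Z + 2*X*Y*Z^2 + X*Y^2 + 2*X*Y^2*Z + X^2*Z + X^2*Z^2 + X^2*Y + 2*X^2*Y*Z + X^2*Y^2 \<ge> 0"
    using assms by (simp add: add_nonneg_nonneg mult_nonneg_nonneg)
  have p: "X*Y \<ge> 0" "Y*Z \<ge> 0" "Z*X \<ge> 0" using assms by auto
  show ?thesis using tri_odd_poly[of X Y Z] G0 p by linarith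
qed

lemma tri_even_le: fixes p q r :: int assumes "p \<ge> 0" "q \<ge> 0" "r \<ge> 0"
  shows "(q+r+2)*(p+r+2)*(p+q+2) \<le> ((p+1)*(q+1)+(q+1)*(r+1)+(r+1)*(p+1))^2 - ((p+1)*(q+1)+(q+1)*(r+1)+(r+1)*(p+1)) + 2"
proof -
  have G0: "2*r^2 + 7*q*r + 3*q*r^2 + 2*q^2 + 3*q^2*r + q^2*r^2 + 7*p*r + 3*p*r^2 + 7*p*q + 10*p*q*r + 2*p*q*r^2 + 3*p*q^2 + 2*p*q^2*r + 2*p^2 + 3*p^2*r + p^2*r^2 + 3*p^2*q + 2*p^2*q*r + p^2*q^2 \<ge> 0"
    using assms by (simp add: add_nonneg_nonneg mult_nonneg_nonneg)
  show ?thesis using tri_even_poly[of p q r] G0 assms by linarith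
qed

lemma merge_odd:
  fixes A B c d k :: int
  assumes "c \<ge> 1" "d \<ge> 1" "2*A < A+B+c+d" "2*B < A+B+c+d" "2*(c+d) < A+B+c+d" "odd (A+B+c+d)"
    and k: "4*k = (A+B+c+d)^2 + 1 - 2*(A^2+B^2+c^2+d^2)"
  shows "A*B*c + A*B*d + A*c*d + B*c*d < k^2"
proof -
  have t: "2*A < A+B+(c+d)" "2*B < A+B+(c+d)" "2*(c+d) < A+B+(c+d)" "odd (A+B+(c+d))"
    using assms by (simp_all add: add.assoc)
  obtain X Y Z where XYZ: "X \<ge> 0" "Y \<ge> 0" "Z \<ge> 0" "A = Y+Z+1" "B = X+Z+1" "c+d = X+Y+1"
    using tri_param_odd[OF t] by blast
  define k' where "k' = X*Y+Y*Z+Z*X+X+Y+Z+1"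
  have e1: "4*k = (A+B+(c+d))^2 + 1 - 2*(A^2+B^2+(c+d)^2) + 4*c*d" using k by algebra
  have e2: "(A+B+(c+d))^2 + 1 - 2*(A^2+B^2+(c+d)^2) = 4*k'"
    unfolding XYZ(6) unfolding XYZ(4,5) k'_def by algebra
  have kk: "k = k' + c*d" using e1 e2 by simp
  have eq: "k^2 - (A*B*c + A*B*d + A*c*d + B*c*d) = (k'^2 - A*B*(c+d)) + c*d*(2*k' + c*d - A - B)"
    unfolding kk by algebra
  have t1: "A*B*(c+d) \<le> k'^2" unfolding XYZ(4,5,6) k'_def using tri_odd_le[OF XYZ(1-3)] by simp
  have m0: "2*k' - A - B \<ge> 0" unfolding k'_def XYZ(4,5) using XYZ(1-3) by simp
  have cd: "c*d \<ge> 1*1" using assms(1,2) by (intro mult_mono) auto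
  have m: "2*k' + c*d - A - B \<ge> 1" using m0 cd by linarith
  have "c*d*(2*k' + c*d - A - B) \<ge> 1*1" using cd m by (intro mult_mono) auto
  thus ?thesis using eq t1 by linarith
qed

lemma merge_even:
  fixes A B c d k :: int
  assumes "c \<ge> 1" "d \<ge> 1" "2*A < A+B+c+d" "2*B < A+B+c+d" "2*(c+d) < A+B+c+d" "even (A+B+c+d)"
    and k: "4*k = (A+B+c+d)^2 - 2*(A^2+B^2+c^2+d^2)"
  shows "A*B*c + A*B*d + A*c*d + B*c*d < k^2 - k + 2"
proof -
  have t: "2*A < A+B+(c+d)" "2*B < A+B+(c+d)" "2*(c+d) < A+B+(c+d)" "even (A+B+(c+d))"
    using assms by (simp_all add: add.assoc)
  obtain X Y Z where XYZ: "X \<ge> 1" "Y \<ge> 1" "Z \<ge> 1" "A = Y+Z" "B = X+Z" "c+d = X+Y"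
    using tri_param_even[OF t] by blast
  define p q r where "p = X - 1" "q = Y - 1" "r = Z - 1"
  have pqr: "p \<ge> 0" "q \<ge> 0" "r \<ge> 0" using XYZ unfolding p_q_r_def by auto
  have ab: "A = q+r+2" "B = p+r+2" "c+d = p+q+2" using XYZ unfolding p_q_r_def by auto
  define k' where "k' = (p+1)*(q+1)+(q+1)*(r+1)+(r+1)*(p+1)"
  have e1: "4*k = (A+B+(c+d))^2 - 2*(A^2+B^2+(c+d)^2) + 4*c*d" using k by algebra
  have e2: "(A+B+(c+d))^2 - 2*(A^2+B^2+(c+d)^2) = 4*k'"
    unfolding ab(3) unfolding ab(1,2) k'_def by algebra
  have kk: "k = k' + c*d" using e1 e2 by simp
  have eq: "k^2 - k + 2 - (A*B*c + A*B*d + A*c*d + B*c*d) = (k'^2 - k' + 2 - A*B*(c+d)) + c*d*(2*k' + c*d - 1 - A - B)"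
    unfolding kk by algebra
  have t1: "A*B*(c+d) \<le> k'^2 - k' + 2" unfolding ab k'_def using tri_even_le[OF pqr] by simp
  have m0: "2*k' - 1 - A - B \<ge> 0" unfolding k'_def ab using pqr
    by (simp add: algebra_simps add_nonneg_nonneg mult_nonneg_nonneg)
  have cd: "c*d \<ge> 1*1" using assms(1,2) by (intro mult_mono) auto
  have m: "2*k' + c*d - 1 - A - B \<ge> 1" using m0 cd by linarith
  have "c*d*(2*k' + c*d - 1 - A - B) \<ge> 1*1" using cd m by (intro mult_mono) auto
  thus ?thesis using eq t1 by linarith
qed

lemma block_odd:
  fixes a b c d k :: int
  assumes "a \<ge> 1" "b \<ge> 1" "c \<ge> 1" "d \<ge> 0"
    "2*a < a+b+c+d" "2*b < a+b+c+d" "2*c < a+b+c+d" "2*d < a+b+c+d" "odd (a+b+c+d)"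
    and k: "4*k = (a+b+c+d)^2 + 1 - 2*(a^2+b^2+c^2+d^2)"
  shows "a*b*c + a*b*d + a*c*d + b*c*d \<le> k^2 \<and>
    (a*b*c + a*b*d + a*c*d + b*c*d = k^2 \<longleftrightarrow> d = 0 \<and> ((a=1 \<and> b=c) \<or> (b=1 \<and> a=c) \<or> (c=1 \<and> a=b)))"
proof (cases "d = 0")
  case True
  have "a*b*c \<le> k^2 \<and> (a*b*c = k^2 \<longleftrightarrow> (a=1 \<and> b=c) \<or> (b=1 \<and> a=c) \<or> (c=1 \<and> a=b))"
    by (rule tri_odd) (use assms True in auto)
  thus ?thesis using True by simp
next
  case False
  hence d1: "d \<ge> 1" using assms by simp
  have "a + b \<noteq> c + d"
  proof
    assume "a + b = c + d"
    hence h: "a+b+c+d = 2*(a+b)" by simp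
    show False using assms(9) unfolding h by simp
  qed
  hence lt: "a*b*c + a*b*d + a*c*d + b*c*d < k^2"
  proof (cases "c + d < a + b")
    case True
    show ?thesis by (rule merge_odd) (use assms d1 True in simp_all)
  next
    case False
    hence "a + b < c + d" using \<open>a + b \<noteq> c + d\<close> by simp
    have "c*d*a + c*d*b + c*a*b + d*a*b < k^2"
      by (rule merge_odd) (use assms d1 \<open>a + b < c + d\<close> in \<open>simp_all add: ac_simps\<close>)
    thus ?thesis by (simp add: ac_simps)
  qed
  thus ?thesis using False by simp
qed

lemma all_eq_even:
  fixes a :: int assumes "a \<ge> 1"
  shows "4*a^3 \<le> (2*a^2)^2 - 2*a^2 + 2 \<and> (4*a^3 = (2*a^2)^2 - 2*a^2 + 2 \<longleftrightarrow> a = 1)"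
proof -
  define t where "t = a - 1"
  have t: "t \<ge> 0" "a = t + 1" using assms unfolding t_def by auto
  have eq: "(2*a^2)^2 - 2*a^2 + 2 - 4*a^3 = 10*t^2 + 12*t^3 + 4*t^4" unfolding t(2) by algebra
  have h: "12*t^3 + 4*t^4 \<ge> 0" using t by simp
  have h2: "t \<noteq> 0 \<Longrightarrow> t^2 > 0" by simp
  have h3: "t^2 \<ge> 0" by simp
  show ?thesis
  proof (intro conjI)
    show "4*a^3 \<le> (2*a^2)^2 - 2*a^2 + 2" using eq h h3 by linarith
    show "(4*a^3 = (2*a^2)^2 - 2*a^2 + 2) = (a = 1)"
    proof
      assume "4*a^3 = (2*a^2)^2 - 2*a^2 + 2"
      hence "t = 0" using eq h h2 by (cases "t = 0") linarith+
      thus "a = 1" using t by simp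
    next
      assume "a = 1" thus "4*a^3 = (2*a^2)^2 - 2*a^2 + 2" by simp
    qed
  qed
qed

lemma block_even:
  fixes a b c d k :: int
  assumes "a \<ge> 1" "b \<ge> 1" "c \<ge> 1" "d \<ge> 0"
    "2*a < a+b+c+d" "2*b < a+b+c+d" "2*c < a+b+c+d" "2*d < a+b+c+d" "even (a+b+c+d)"
    and k: "4*k = (a+b+c+d)^2 - 2*(a^2+b^2+c^2+d^2)"
  shows "a*b*c + a*b*d + a*c*d + b*c*d \<le> k^2 - k + 2 \<and>
    (a*b*c + a*b*d + a*c*d + b*c*d = k^2 - k + 2 \<longleftrightarrow> (a=1 \<and> b=1 \<and> c=1 \<and> d=1) \<or> (d = 0 \<and> a=2 \<and> b=2 \<and> c=2))"
proof (cases "d = 0")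
  case True
  have "a*b*c \<le> k^2 - k + 2 \<and> (a*b*c = k^2 - k + 2 \<longleftrightarrow> a=2 \<and> b=2 \<and> c=2)"
    by (rule tri_even) (use assms True in auto)
  thus ?thesis using True by simp
next
  case False
  hence d1: "d \<ge> 1" using assms by simp
  show ?thesis
  proof (cases "a = b \<and> b = c \<and> c = d")
    case True
    hence e: "b = a" "c = a" "d = a" by auto
    have kk: "k = 2*a^2" using k unfolding e by (simp add: algebra_simps power2_eq_square)
    have "a*b*c + a*b*d + a*c*d + b*c*d = 4*a^3" unfolding e by (simp add: algebra_simps power3_eq_cube)
    thus ?thesis using all_eq_even[OF assms(1)] unfolding kk e by auto
  next
    case neq: False
    have lt: "a*b*c + a*b*d + a*c*d + b*c*d < k^2 - k + 2"
    proof -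
      consider "c + d < a + b" | "a + b < c + d" | "b + d < a + c" | "a + c < b + d" | "b + c < a + d" | "a + d < b + c"
        using neq by (smt (verit))
      thus ?thesis
      proof cases
        case 1 show ?thesis by (rule merge_even) (use assms d1 1 in simp_all)
      next
        case 2
        have "c*d*a + c*d*b + c*a*b + d*a*b < k^2 - k + 2"
          by (rule merge_even) (use assms d1 2 in \<open>simp_all add: ac_simps\<close>)
        thus ?thesis by (simp add: ac_simps)
      next
        case 3
        have "a*c*b + a*c*d + a*b*d + c*b*d < k^2 - k + 2"
          by (rule merge_even) (use assms d1 3 in \<open>simp_all add: ac_simps\<close>)
        thus ?thesis by (simp add: ac_simps)
      next
        case 4
        have "b*d*a + b*d*c + b*a*c + d*a*c < k^2 - k + 2"
          by (rule merge_even) (use assms d1 4 in \<open>simp_all add: ac_simps\<close>)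
        thus ?thesis by (simp add: ac_simps)
      next
        case 5
        have "a*d*b + a*d*c + a*b*c + d*b*c < k^2 - k + 2"
          by (rule merge_even) (use assms d1 5 in \<open>simp_all add: ac_simps\<close>)
        thus ?thesis by (simp add: ac_simps)
      next
        case 6
        have "b*c*a + b*c*d + b*a*d + c*a*d < k^2 - k + 2"
          by (rule merge_even) (use assms d1 6 in \<open>simp_all add: ac_simps\<close>)
        thus ?thesis by (simp add: ac_simps)
      qed
    qed
    thus ?thesis using False neq by auto
  qed
qed

lemma even_xyxy: fixes x y :: int shows "even (x*y*(x+y))"
  by (cases "even x"; cases "even y") auto

lemma block_final:
  fixes a b c d y c1 c2 c3 :: int
  assumes pos: "a \<ge> 1" "b \<ge> 1" "c \<ge> 1" "d \<ge> 0"
    and st: "2*a < a+b+c+d" "2*b < a+b+c+d" "2*c < a+b+c+d" "2*d < a+b+c+d"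
    and C1: "c1 = 2*y + (a+b+c+d)"
    and C2: "2*c2 = 2*y^2 + 2*y*(a+b+c+d) + (a+b+c+d)^2 - (a^2+b^2+c^2+d^2)"
    and C3: "6*c3 = (a+b+c+d)^3 - 3*(a+b+c+d)*(a^2+b^2+c^2+d^2) + 2*(a^3+b^3+c^3+d^3)"
  shows "even (c3 - c1 * c2)
    \<and> (c1 \<in> {-1, 0} \<longrightarrow> c2 > 0)
    \<and> (c1 = -1 \<longrightarrow> 0 \<le> c3 \<and> c3 \<le> c2^2)
    \<and> (c1 = 0 \<longrightarrow> 0 \<le> c3 \<and> c3 \<le> c2^2 - c2 + 2)
    \<and> (c1 = -1 \<longrightarrow> (c3 = c2^2 \<longleftrightarrow> d = 0 \<and> ((a=1 \<and> b=c) \<or> (b=1 \<and> a=c) \<or> (c=1 \<and> a=b))))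
    \<and> (c1 = 0 \<longrightarrow> (c3 = c2^2 - c2 + 2 \<longleftrightarrow> (a=1 \<and> b=1 \<and> c=1 \<and> d=1) \<or> (d = 0 \<and> a=2 \<and> b=2 \<and> c=2)))"
proof -
  define V where "V = a+b+c+d"
  define e2 where "e2 = a*b+a*c+a*d+b*c+b*d+c*d"
  define e3 where "e3 = a*b*c + a*b*d + a*c*d + b*c*d"
  have "6*c3 = 6*e3" unfolding C3 e3_def by algebra
  hence c3: "c3 = e3" by simp
  have "2*c2 = 2*(y^2 + y*V + e2)" unfolding C2 V_def e2_def by algebra
  hence c2: "c2 = y^2 + y*V + e2" by simp
  have e3nn: "e3 \<ge> 0" unfolding e3_def using pos by (simp add: add_nonneg_nonneg mult_nonneg_nonneg)
  have par: "even (c3 - c1*c2)"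
  proof -
    have i1: "V*e2 - e3 = a*b*(a+b) + a*c*(a+c) + a*d*(a+d) + b*c*(b+c) + b*d*(b+d) + c*d*(c+d) + 2*e3"
      unfolding V_def e2_def e3_def by algebra
    have "even (V*e2 - e3)" unfolding i1 by (intro dvd_add even_xyxy dvd_triv_left)
    moreover have i2: "c3 - c1*c2 = - (V*e2 - e3) - 2*y*e2 - 2*y*y*(y+V) - y*V*(y+V)"
      unfolding c3 c2 C1 V_def by algebra
    moreover have "even (y*V*(y+V))" by (rule even_xyxy)
    ultimately show ?thesis by simp
  qed
  have Q: "V^2 - 2*(a^2+b^2+c^2+d^2) = a*(V-2*a) + b*(V-2*b) + c*(V-2*c) + d*(V-2*d)"
    unfolding V_def by algebra
  have q1: "a*(V-2*a) \<ge> 1*1" "b*(V-2*b) \<ge> 1*1" "c*(V-2*c) \<ge> 1*1" using pos st unfolding V_def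
    by (intro mult_mono; simp)+
  have q2: "d*(V-2*d) \<ge> 0" using pos st unfolding V_def by simp
  have Qpos: "V^2 - 2*(a^2+b^2+c^2+d^2) \<ge> 3" using Q q1 q2 by linarith
  have odd_case: "c1 = -1 \<Longrightarrow> 4*c2 = V^2 + 1 - 2*(a^2+b^2+c^2+d^2) \<and> odd V"
  proof -
    assume h: "c1 = -1"
    hence y: "2*y = -1 - V" using C1 V_def by simp
    have "4*c2 = 2*(2*c2)" by simp
    also have "\<dots> = (2*y)^2 + 2*(2*y)*V + 2*V^2 - 2*(a^2+b^2+c^2+d^2)" unfolding C2 V_def by algebra
    also have "\<dots> = V^2 + 1 - 2*(a^2+b^2+c^2+d^2)" unfolding y by algebra
    finally have "4*c2 = V^2 + 1 - 2*(a^2+b^2+c^2+d^2)" .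
    moreover have "odd V"
    proof
      assume "even V" then obtain w where "V = 2*w" by auto
      thus False using y by presburger
    qed
    ultimately show ?thesis by simp
  qed
  have even_case: "c1 = 0 \<Longrightarrow> 4*c2 = V^2 - 2*(a^2+b^2+c^2+d^2) \<and> even V"
  proof -
    assume h: "c1 = 0"
    hence y: "2*y = - V" using C1 V_def by simp
    have "4*c2 = 2*(2*c2)" by simp
    also have "\<dots> = (2*y)^2 + 2*(2*y)*V + 2*V^2 - 2*(a^2+b^2+c^2+d^2)" unfolding C2 V_def by algebra
    also have "\<dots> = V^2 - 2*(a^2+b^2+c^2+d^2)" unfolding y by algebra
    finally have "4*c2 = V^2 - 2*(a^2+b^2+c^2+d^2)" .
    moreover have "even V" using y by (metis dvd_minus_iff dvd_triv_left)
    ultimately show ?thesis by simp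
  qed
  have pos2: "c1 \<in> {-1, 0} \<longrightarrow> c2 > 0"
  proof
    assume "c1 \<in> {-1, 0}"
    hence "c1 = -1 \<or> c1 = 0" by simp
    thus "c2 > 0" using odd_case even_case Qpos by auto
  qed
  have O: "c1 = -1 \<longrightarrow> 0 \<le> c3 \<and> c3 \<le> c2^2 \<and> (c3 = c2^2 \<longleftrightarrow> d = 0 \<and> ((a=1 \<and> b=c) \<or> (b=1 \<and> a=c) \<or> (c=1 \<and> a=b)))"
  proof
    assume h: "c1 = -1"
    have "e3 \<le> c2^2 \<and> (e3 = c2^2 \<longleftrightarrow> d = 0 \<and> ((a=1 \<and> b=c) \<or> (b=1 \<and> a=c) \<or> (c=1 \<and> a=b)))"
      unfolding e3_def by (rule block_odd) (use pos st odd_case[OF h] in \<open>simp_all add: V_def\<close>)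
    thus "0 \<le> c3 \<and> c3 \<le> c2^2 \<and> (c3 = c2^2 \<longleftrightarrow> d = 0 \<and> ((a=1 \<and> b=c) \<or> (b=1 \<and> a=c) \<or> (c=1 \<and> a=b)))"
      using c3 e3nn by simp
  qed
  have E: "c1 = 0 \<longrightarrow> 0 \<le> c3 \<and> c3 \<le> c2^2 - c2 + 2 \<and> (c3 = c2^2 - c2 + 2 \<longleftrightarrow> (a=1 \<and> b=1 \<and> c=1 \<and> d=1) \<or> (d = 0 \<and> a=2 \<and> b=2 \<and> c=2))"
  proof
    assume h: "c1 = 0"
    have "e3 \<le> c2^2 - c2 + 2 \<and> (e3 = c2^2 - c2 + 2 \<longleftrightarrow> (a=1 \<and> b=1 \<and> c=1 \<and> d=1) \<or> (d = 0 \<and> a=2 \<and> b=2 \<and> c=2))"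
      unfolding e3_def by (rule block_even) (use pos st even_case[OF h] in \<open>simp_all add: V_def\<close>)
    thus "0 \<le> c3 \<and> c3 \<le> c2^2 - c2 + 2 \<and> (c3 = c2^2 - c2 + 2 \<longleftrightarrow> (a=1 \<and> b=1 \<and> c=1 \<and> d=1) \<or> (d = 0 \<and> a=2 \<and> b=2 \<and> c=2))"
      using c3 e3nn by simp
  qed
  show ?thesis using par pos2 O E by blast
qed

lemma ord4_cases:
  assumes "is_ordering4 i j k l"
  shows "(i,j,k,l) \<in> {(1,2,3,4),(1,2,4,3),(1,3,2,4),(1,3,4,2),(1,4,2,3),(1,4,3,2),
     (2,1,3,4),(2,1,4,3),(2,3,1,4),(2,3,4,1),(2,4,1,3),(2,4,3,1),
     (3,1,2,4),(3,1,4,2),(3,2,1,4),(3,2,4,1),(3,4,1,2),(3,4,2,1),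
     (4,1,2,3),(4,1,3,2),(4,2,1,3),(4,2,3,1),(4,3,1,2),(4,3,2,1)}"
proof -
  have d: "distinct [i,j,k,l]" and s: "{i,j,k,l} = {1,2,3,4}" using assms unfolding is_ordering4_def by auto
  have "i \<in> {1,2,3,4}" "j \<in> {1,2,3,4}" "k \<in> {1,2,3,4}" "l \<in> {1,2,3,4}" using s by blast+
  hence "i=1 \<or> i=2 \<or> i=3 \<or> i=4" "j=1 \<or> j=2 \<or> j=3 \<or> j=4" "k=1 \<or> k=2 \<or> k=3 \<or> k=4" "l=1 \<or> l=2 \<or> l=3 \<or> l=4" by auto
  thus ?thesis using d by (elim disjE) simp_all
qed

lemma ex_ord4:
  "(\<exists>i j k l. is_ordering4 i j k l \<and> P i j k l) \<longleftrightarrow>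
   P 1 2 3 4 \<or> P 1 2 4 3 \<or> P 1 3 2 4 \<or> P 1 3 4 2 \<or> P 1 4 2 3 \<or> P 1 4 3 2 \<or>
   P 2 1 3 4 \<or> P 2 1 4 3 \<or> P 2 3 1 4 \<or> P 2 3 4 1 \<or> P 2 4 1 3 \<or> P 2 4 3 1 \<or>
   P 3 1 2 4 \<or> P 3 1 4 2 \<or> P 3 2 1 4 \<or> P 3 2 4 1 \<or> P 3 4 1 2 \<or> P 3 4 2 1 \<or>
   P 4 1 2 3 \<or> P 4 1 3 2 \<or> P 4 2 1 3 \<or> P 4 2 3 1 \<or> P 4 3 1 2 \<or> P 4 3 2 1"
proof
  assume "\<exists>i j k l. is_ordering4 i j k l \<and> P i j k l"
  then obtain i j k l where "is_ordering4 i j k l" "P i j k l" by blast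
  with ord4_cases[OF this(1)] show "P 1 2 3 4 \<or> P 1 2 4 3 \<or> P 1 3 2 4 \<or> P 1 3 4 2 \<or> P 1 4 2 3 \<or> P 1 4 3 2 \<or>
   P 2 1 3 4 \<or> P 2 1 4 3 \<or> P 2 3 1 4 \<or> P 2 3 4 1 \<or> P 2 4 1 3 \<or> P 2 4 3 1 \<or>
   P 3 1 2 4 \<or> P 3 1 4 2 \<or> P 3 2 1 4 \<or> P 3 2 4 1 \<or> P 3 4 1 2 \<or> P 3 4 2 1 \<or>
   P 4 1 2 3 \<or> P 4 1 3 2 \<or> P 4 2 1 3 \<or> P 4 2 3 1 \<or> P 4 3 1 2 \<or> P 4 3 2 1" by auto
next
  assume h: "P 1 2 3 4 \<or> P 1 2 4 3 \<or> P 1 3 2 4 \<or> P 1 3 4 2 \<or> P 1 4 2 3 \<or> P 1 4 3 2 \<or>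
   P 2 1 3 4 \<or> P 2 1 4 3 \<or> P 2 3 1 4 \<or> P 2 3 4 1 \<or> P 2 4 1 3 \<or> P 2 4 3 1 \<or>
   P 3 1 2 4 \<or> P 3 1 4 2 \<or> P 3 2 1 4 \<or> P 3 2 4 1 \<or> P 3 4 1 2 \<or> P 3 4 2 1 \<or>
   P 4 1 2 3 \<or> P 4 1 3 2 \<or> P 4 2 1 3 \<or> P 4 2 3 1 \<or> P 4 3 1 2 \<or> P 4 3 2 1"
  have o: "is_ordering4 1 2 3 4" "is_ordering4 1 2 4 3" "is_ordering4 1 3 2 4" "is_ordering4 1 3 4 2" "is_ordering4 1 4 2 3" "is_ordering4 1 4 3 2" "is_ordering4 2 1 3 4" "is_ordering4 2 1 4 3" "is_ordering4 2 3 1 4" "is_ordering4 2 3 4 1" "is_ordering4 2 4 1 3" "is_ordering4 2 4 3 1" "is_ordering4 3 1 2 4" "is_ordering4 3 1 4 2" "is_ordering4 3 2 1 4" "is_ordering4 3 2 4 1" "is_ordering4 3 4 1 2" "is_ordering4 3 4 2 1" "is_ordering4 4 1 2 3" "is_ordering4 4 1 3 2" "is_ordering4 4 2 1 3" "is_ordering4 4 2 3 1" "is_ordering4 4 3 1 2" "is_ordering4 4 3 2 1"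
    unfolding is_ordering4_def by auto
  from h show "\<exists>i j k l. is_ordering4 i j k l \<and> P i j k l"
    by (elim disjE) (use o in blast)+
qed
definition BLKP :: "int \<Rightarrow> int \<Rightarrow> int \<Rightarrow> int \<Rightarrow> int \<Rightarrow> int \<Rightarrow> int \<Rightarrow> bool \<Rightarrow> bool \<Rightarrow> bool" where
  "BLKP a b c d V Q R OD EV \<longleftrightarrow> a \<ge> 1 \<and> b \<ge> 1 \<and> c \<ge> 1 \<and> d \<ge> 0
     \<and> 2*a < a+b+c+d \<and> 2*b < a+b+c+d \<and> 2*c < a+b+c+d \<and> 2*d < a+b+c+d
     \<and> V = a+b+c+d \<and> Q = a^2+b^2+c^2+d^2 \<and> R = a^3+b^3+c^3+d^3
     \<and> (OD \<longleftrightarrow> d = 0 \<and> ((a=1 \<and> b=c) \<or> (b=1 \<and> a=c) \<or> (c=1 \<and> a=b)))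
     \<and> (EV \<longleftrightarrow> (a=1 \<and> b=1 \<and> c=1 \<and> d=1) \<or> (d = 0 \<and> a=2 \<and> b=2 \<and> c=2))"


lemma BLKP_I: "a\<ge>1 \<Longrightarrow> b\<ge>1 \<Longrightarrow> c \<ge> 1 \<Longrightarrow> d \<ge> 0 \<Longrightarrow> 2*a < a+b+c+d \<Longrightarrow> 2*b < a+b+c+d \<Longrightarrow> 2*c < a+b+c+d \<Longrightarrow> 2*d < a+b+c+d
  \<Longrightarrow> V = a+b+c+d \<Longrightarrow> Q = a^2+b^2+c^2+d^2 \<Longrightarrow> R = a^3+b^3+c^3+d^3
  \<Longrightarrow> (OD \<longleftrightarrow> d = 0 \<and> ((a=1 \<and> b=c) \<or> (b=1 \<and> a=c) \<or> (c=1 \<and> a=b)))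
  \<Longrightarrow> (EV \<longleftrightarrow> (a=1 \<and> b=1 \<and> c=1 \<and> d=1) \<or> (d = 0 \<and> a=2 \<and> b=2 \<and> c=2)) \<Longrightarrow> BLKP a b c d V Q R OD EV"
  unfolding BLKP_def by blast

lemma BLKP_D:
  assumes "BLKP a b c d V Q R OD EV"
  shows "a\<ge>1" "b\<ge>1" "c \<ge> 1" "d \<ge> 0" "2*a < a+b+c+d" "2*b < a+b+c+d" "2*c < a+b+c+d" "2*d < a+b+c+d"
    "V = a+b+c+d" "Q = a^2+b^2+c^2+d^2" "R = a^3+b^3+c^3+d^3"
    "(OD \<longleftrightarrow> d = 0 \<and> ((a=1 \<and> b=c) \<or> (b=1 \<and> a=c) \<or> (c=1 \<and> a=b)))"
    "(EV \<longleftrightarrow> (a=1 \<and> b=1 \<and> c=1 \<and> d=1) \<or> (d = 0 \<and> a=2 \<and> b=2 \<and> c=2))"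
  using assms unfolding BLKP_def by blast+

lemma leaf_z1:
  fixes v :: "nat \<Rightarrow> nat" and p :: "nat \<Rightarrow> 'a"
  assumes P: "0 < v 2" "0 < v 3" "0 < v 4" and C: "v 1 = 0" and F: "p 2 \<noteq> p 3" "p 2 \<noteq> p 4" "p 3 \<noteq> p 4" and s: "2 * (v 2) < v 1 + v 2 + v 3 + v 4" "2 * (v 3) < v 1 + v 2 + v 3 + v 4" "2 * (v 4) < v 1 + v 2 + v 3 + v 4"
  shows "BLKP (int (v 2)) (int (v 3)) (int (v 4)) (int (0)) (int (\<Sum>j\<in>{1..4}. v j))
     (int (\<Sum>L\<in>(\<Union>i\<in>{1..4}. if 0 < v i then {p i} else {}). (\<Sum>j\<in>{1..4}. if p j = L then v j else 0)^2))
     (int (\<Sum>L\<in>(\<Union>i\<in>{1..4}. if 0 < v i then {p i} else {}). (\<Sum>j\<in>{1..4}. if p j = L then v j else 0)^3))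
     ((\<exists>i j k l. is_ordering4 i j k l \<and> p i = p j \<and> p j \<noteq> p k \<and> p j \<noteq> p l \<and> p k \<noteq> p l
              \<and> v i \<ge> 1 \<and> v j \<ge> 1 \<and> v k = 1 \<and> v i + v j = v l)
        \<or> (\<exists>i j k l. is_ordering4 i j k l \<and> v i = 0 \<and> p j \<noteq> p k \<and> p j \<noteq> p l \<and> p k \<noteq> p l
              \<and> v j = 1 \<and> v k = v l \<and> v k \<ge> 1))
     ((p 1 \<noteq> p 2 \<and> p 1 \<noteq> p 3 \<and> p 1 \<noteq> p 4 \<and> p 2 \<noteq> p 3 \<and> p 2 \<noteq> p 4 \<and> p 3 \<noteq> p 4
              \<and> v 1 = 1 \<and> v 2 = 1 \<and> v 3 = 1 \<and> v 4 = 1)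
        \<or> (\<exists>i j k l. is_ordering4 i j k l \<and> p i = p j \<and> p j \<noteq> p k \<and> p j \<noteq> p l \<and> p k \<noteq> p l
              \<and> v i = 1 \<and> v j = 1 \<and> v k = 2 \<and> v l = 2)
        \<or> (\<exists>i j k l. is_ordering4 i j k l \<and> v i = 0 \<and> p j \<noteq> p k \<and> p j \<noteq> p l \<and> p k \<noteq> p l
              \<and> v j = 2 \<and> v k = 2 \<and> v l = 2))"
proof -
  have S: "{1..4::nat} = {1,2,3,4}" by auto
  have sum4: "\<And>f::nat\<Rightarrow>nat. (\<Sum>j\<in>{1,2,3,4}. f j) = f 1 + f 2 + f 3 + f 4" by simp
  have L: "(\<Union>i\<in>{1,2,3,4}. if 0 < v i then {p i} else {}) = {p 2, p 3, p 4}" using P C by auto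
  show ?thesis unfolding S sum4 L ex_ord4
    by (rule BLKP_I) ((use P C s in simp; fail) | (use P C F in \<open>auto simp: sum.insert_if\<close>; fail))+
qed

lemma leaf_z2:
  fixes v :: "nat \<Rightarrow> nat" and p :: "nat \<Rightarrow> 'a"
  assumes P: "0 < v 1" "0 < v 3" "0 < v 4" and C: "v 2 = 0" and F: "p 1 \<noteq> p 3" "p 1 \<noteq> p 4" "p 3 \<noteq> p 4" and s: "2 * (v 1) < v 1 + v 2 + v 3 + v 4" "2 * (v 3) < v 1 + v 2 + v 3 + v 4" "2 * (v 4) < v 1 + v 2 + v 3 + v 4"
  shows "BLKP (int (v 1)) (int (v 3)) (int (v 4)) (int (0)) (int (\<Sum>j\<in>{1..4}. v j))
     (int (\<Sum>L\<in>(\<Union>i\<in>{1..4}. if 0 < v i then {p i} else {}). (\<Sum>j\<in>{1..4}. if p j = L then v j else 0)^2))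
     (int (\<Sum>L\<in>(\<Union>i\<in>{1..4}. if 0 < v i then {p i} else {}). (\<Sum>j\<in>{1..4}. if p j = L then v j else 0)^3))
     ((\<exists>i j k l. is_ordering4 i j k l \<and> p i = p j \<and> p j \<noteq> p k \<and> p j \<noteq> p l \<and> p k \<noteq> p l
              \<and> v i \<ge> 1 \<and> v j \<ge> 1 \<and> v k = 1 \<and> v i + v j = v l)
        \<or> (\<exists>i j k l. is_ordering4 i j k l \<and> v i = 0 \<and> p j \<noteq> p k \<and> p j \<noteq> p l \<and> p k \<noteq> p l
              \<and> v j = 1 \<and> v k = v l \<and> v k \<ge> 1))
     ((p 1 \<noteq> p 2 \<and> p 1 \<noteq> p 3 \<and> p 1 \<noteq> p 4 \<and> p 2 \<noteq> p 3 \<and> p 2 \<noteq> p 4 \<and> p 3 \<noteq> p 4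
              \<and> v 1 = 1 \<and> v 2 = 1 \<and> v 3 = 1 \<and> v 4 = 1)
        \<or> (\<exists>i j k l. is_ordering4 i j k l \<and> p i = p j \<and> p j \<noteq> p k \<and> p j \<noteq> p l \<and> p k \<noteq> p l
              \<and> v i = 1 \<and> v j = 1 \<and> v k = 2 \<and> v l = 2)
        \<or> (\<exists>i j k l. is_ordering4 i j k l \<and> v i = 0 \<and> p j \<noteq> p k \<and> p j \<noteq> p l \<and> p k \<noteq> p l
              \<and> v j = 2 \<and> v k = 2 \<and> v l = 2))"
proof -
  have S: "{1..4::nat} = {1,2,3,4}" by auto
  have sum4: "\<And>f::nat\<Rightarrow>nat. (\<Sum>j\<in>{1,2,3,4}. f j) = f 1 + f 2 + f 3 + f 4" by simp
  have L: "(\<Union>i\<in>{1,2,3,4}. if 0 < v i then {p i} else {}) = {p 1, p 3, p 4}" using P C by auto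
  show ?thesis unfolding S sum4 L ex_ord4
    by (rule BLKP_I) ((use P C s in simp; fail) | (use P C F in \<open>auto simp: sum.insert_if\<close>; fail))+
qed

lemma leaf_z3:
  fixes v :: "nat \<Rightarrow> nat" and p :: "nat \<Rightarrow> 'a"
  assumes P: "0 < v 1" "0 < v 2" "0 < v 4" and C: "v 3 = 0" and F: "p 1 \<noteq> p 2" "p 1 \<noteq> p 4" "p 2 \<noteq> p 4" and s: "2 * (v 1) < v 1 + v 2 + v 3 + v 4" "2 * (v 2) < v 1 + v 2 + v 3 + v 4" "2 * (v 4) < v 1 + v 2 + v 3 + v 4"
  shows "BLKP (int (v 1)) (int (v 2)) (int (v 4)) (int (0)) (int (\<Sum>j\<in>{1..4}. v j))
     (int (\<Sum>L\<in>(\<Union>i\<in>{1..4}. if 0 < v i then {p i} else {}). (\<Sum>j\<in>{1..4}. if p j = L then v j else 0)^2))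
     (int (\<Sum>L\<in>(\<Union>i\<in>{1..4}. if 0 < v i then {p i} else {}). (\<Sum>j\<in>{1..4}. if p j = L then v j else 0)^3))
     ((\<exists>i j k l. is_ordering4 i j k l \<and> p i = p j \<and> p j \<noteq> p k \<and> p j \<noteq> p l \<and> p k \<noteq> p l
              \<and> v i \<ge> 1 \<and> v j \<ge> 1 \<and> v k = 1 \<and> v i + v j = v l)
        \<or> (\<exists>i j k l. is_ordering4 i j k l \<and> v i = 0 \<and> p j \<noteq> p k \<and> p j \<noteq> p l \<and> p k \<noteq> p l
              \<and> v j = 1 \<and> v k = v l \<and> v k \<ge> 1))
     ((p 1 \<noteq> p 2 \<and> p 1 \<noteq> p 3 \<and> p 1 \<noteq> p 4 \<and> p 2 \<noteq> p 3 \<and> p 2 \<noteq> p 4 \<and> p 3 \<noteq> p 4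
              \<and> v 1 = 1 \<and> v 2 = 1 \<and> v 3 = 1 \<and> v 4 = 1)
        \<or> (\<exists>i j k l. is_ordering4 i j k l \<and> p i = p j \<and> p j \<noteq> p k \<and> p j \<noteq> p l \<and> p k \<noteq> p l
              \<and> v i = 1 \<and> v j = 1 \<and> v k = 2 \<and> v l = 2)
        \<or> (\<exists>i j k l. is_ordering4 i j k l \<and> v i = 0 \<and> p j \<noteq> p k \<and> p j \<noteq> p l \<and> p k \<noteq> p l
              \<and> v j = 2 \<and> v k = 2 \<and> v l = 2))"
proof -
  have S: "{1..4::nat} = {1,2,3,4}" by auto
  have sum4: "\<And>f::nat\<Rightarrow>nat. (\<Sum>j\<in>{1,2,3,4}. f j) = f 1 + f 2 + f 3 + f 4" by simp
  have L: "(\<Union>i\<in>{1,2,3,4}. if 0 < v i then {p i} else {}) = {p 1, p 2, p 4}" using P C by auto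
  show ?thesis unfolding S sum4 L ex_ord4
    by (rule BLKP_I) ((use P C s in simp; fail) | (use P C F in \<open>auto simp: sum.insert_if\<close>; fail))+
qed

lemma leaf_z4:
  fixes v :: "nat \<Rightarrow> nat" and p :: "nat \<Rightarrow> 'a"
  assumes P: "0 < v 1" "0 < v 2" "0 < v 3" and C: "v 4 = 0" and F: "p 1 \<noteq> p 2" "p 1 \<noteq> p 3" "p 2 \<noteq> p 3" and s: "2 * (v 1) < v 1 + v 2 + v 3 + v 4" "2 * (v 2) < v 1 + v 2 + v 3 + v 4" "2 * (v 3) < v 1 + v 2 + v 3 + v 4"
  shows "BLKP (int (v 1)) (int (v 2)) (int (v 3)) (int (0)) (int (\<Sum>j\<in>{1..4}. v j))
     (int (\<Sum>L\<in>(\<Union>i\<in>{1..4}. if 0 < v i then {p i} else {}). (\<Sum>j\<in>{1..4}. if p j = L then v j else 0)^2))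
     (int (\<Sum>L\<in>(\<Union>i\<in>{1..4}. if 0 < v i then {p i} else {}). (\<Sum>j\<in>{1..4}. if p j = L then v j else 0)^3))
     ((\<exists>i j k l. is_ordering4 i j k l \<and> p i = p j \<and> p j \<noteq> p k \<and> p j \<noteq> p l \<and> p k \<noteq> p l
              \<and> v i \<ge> 1 \<and> v j \<ge> 1 \<and> v k = 1 \<and> v i + v j = v l)
        \<or> (\<exists>i j k l. is_ordering4 i j k l \<and> v i = 0 \<and> p j \<noteq> p k \<and> p j \<noteq> p l \<and> p k \<noteq> p l
              \<and> v j = 1 \<and> v k = v l \<and> v k \<ge> 1))
     ((p 1 \<noteq> p 2 \<and> p 1 \<noteq> p 3 \<and> p 1 \<noteq> p 4 \<and> p 2 \<noteq> p 3 \<and> p 2 \<noteq> p 4 \<and> p 3 \<noteq> p 4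
              \<and> v 1 = 1 \<and> v 2 = 1 \<and> v 3 = 1 \<and> v 4 = 1)
        \<or> (\<exists>i j k l. is_ordering4 i j k l \<and> p i = p j \<and> p j \<noteq> p k \<and> p j \<noteq> p l \<and> p k \<noteq> p l
              \<and> v i = 1 \<and> v j = 1 \<and> v k = 2 \<and> v l = 2)
        \<or> (\<exists>i j k l. is_ordering4 i j k l \<and> v i = 0 \<and> p j \<noteq> p k \<and> p j \<noteq> p l \<and> p k \<noteq> p l
              \<and> v j = 2 \<and> v k = 2 \<and> v l = 2))"
proof -
  have S: "{1..4::nat} = {1,2,3,4}" by auto
  have sum4: "\<And>f::nat\<Rightarrow>nat. (\<Sum>j\<in>{1,2,3,4}. f j) = f 1 + f 2 + f 3 + f 4" by simp
  have L: "(\<Union>i\<in>{1,2,3,4}. if 0 < v i then {p i} else {}) = {p 1, p 2, p 3}" using P C by auto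
  show ?thesis unfolding S sum4 L ex_ord4
    by (rule BLKP_I) ((use P C s in simp; fail) | (use P C F in \<open>auto simp: sum.insert_if\<close>; fail))+
qed

lemma leaf_q12:
  fixes v :: "nat \<Rightarrow> nat" and p :: "nat \<Rightarrow> 'a"
  assumes P: "0 < v 1" "0 < v 2" "0 < v 3" "0 < v 4" and C: "p 1 = p 2" and F: "p 1 \<noteq> p 3" "p 1 \<noteq> p 4" "p 3 \<noteq> p 4" and s: "2 * (v 1 + v 2) < v 1 + v 2 + v 3 + v 4" "2 * (v 3) < v 1 + v 2 + v 3 + v 4" "2 * (v 4) < v 1 + v 2 + v 3 + v 4"
  shows "BLKP (int (v 1 + v 2)) (int (v 3)) (int (v 4)) (int (0)) (int (\<Sum>j\<in>{1..4}. v j))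
     (int (\<Sum>L\<in>(\<Union>i\<in>{1..4}. if 0 < v i then {p i} else {}). (\<Sum>j\<in>{1..4}. if p j = L then v j else 0)^2))
     (int (\<Sum>L\<in>(\<Union>i\<in>{1..4}. if 0 < v i then {p i} else {}). (\<Sum>j\<in>{1..4}. if p j = L then v j else 0)^3))
     ((\<exists>i j k l. is_ordering4 i j k l \<and> p i = p j \<and> p j \<noteq> p k \<and> p j \<noteq> p l \<and> p k \<noteq> p l
              \<and> v i \<ge> 1 \<and> v j \<ge> 1 \<and> v k = 1 \<and> v i + v j = v l)
        \<or> (\<exists>i j k l. is_ordering4 i j k l \<and> v i = 0 \<and> p j \<noteq> p k \<and> p j \<noteq> p l \<and> p k \<noteq> p l
              \<and> v j = 1 \<and> v k = v l \<and> v k \<ge> 1))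
     ((p 1 \<noteq> p 2 \<and> p 1 \<noteq> p 3 \<and> p 1 \<noteq> p 4 \<and> p 2 \<noteq> p 3 \<and> p 2 \<noteq> p 4 \<and> p 3 \<noteq> p 4
              \<and> v 1 = 1 \<and> v 2 = 1 \<and> v 3 = 1 \<and> v 4 = 1)
        \<or> (\<exists>i j k l. is_ordering4 i j k l \<and> p i = p j \<and> p j \<noteq> p k \<and> p j \<noteq> p l \<and> p k \<noteq> p l
              \<and> v i = 1 \<and> v j = 1 \<and> v k = 2 \<and> v l = 2)
        \<or> (\<exists>i j k l. is_ordering4 i j k l \<and> v i = 0 \<and> p j \<noteq> p k \<and> p j \<noteq> p l \<and> p k \<noteq> p l
              \<and> v j = 2 \<and> v k = 2 \<and> v l = 2))"
proof -
  have S: "{1..4::nat} = {1,2,3,4}" by auto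
  have sum4: "\<And>f::nat\<Rightarrow>nat. (\<Sum>j\<in>{1,2,3,4}. f j) = f 1 + f 2 + f 3 + f 4" by simp
  have L: "(\<Union>i\<in>{1,2,3,4}. if 0 < v i then {p i} else {}) = {p 1, p 3, p 4}" using P C by auto
  show ?thesis unfolding S sum4 L ex_ord4
    by (rule BLKP_I) ((use P C s in simp; fail) | (use P C F in \<open>auto simp: sum.insert_if\<close>; fail))+
qed

lemma leaf_q13:
  fixes v :: "nat \<Rightarrow> nat" and p :: "nat \<Rightarrow> 'a"
  assumes P: "0 < v 1" "0 < v 2" "0 < v 3" "0 < v 4" and C: "p 1 = p 3" and F: "p 1 \<noteq> p 2" "p 1 \<noteq> p 4" "p 2 \<noteq> p 4" and s: "2 * (v 1 + v 3) < v 1 + v 2 + v 3 + v 4" "2 * (v 2) < v 1 + v 2 + v 3 + v 4" "2 * (v 4) < v 1 + v 2 + v 3 + v 4"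
  shows "BLKP (int (v 1 + v 3)) (int (v 2)) (int (v 4)) (int (0)) (int (\<Sum>j\<in>{1..4}. v j))
     (int (\<Sum>L\<in>(\<Union>i\<in>{1..4}. if 0 < v i then {p i} else {}). (\<Sum>j\<in>{1..4}. if p j = L then v j else 0)^2))
     (int (\<Sum>L\<in>(\<Union>i\<in>{1..4}. if 0 < v i then {p i} else {}). (\<Sum>j\<in>{1..4}. if p j = L then v j else 0)^3))
     ((\<exists>i j k l. is_ordering4 i j k l \<and> p i = p j \<and> p j \<noteq> p k \<and> p j \<noteq> p l \<and> p k \<noteq> p l
              \<and> v i \<ge> 1 \<and> v j \<ge> 1 \<and> v k = 1 \<and> v i + v j = v l)
        \<or> (\<exists>i j k l. is_ordering4 i j k l \<and> v i = 0 \<and> p j \<noteq> p k \<and> p j \<noteq> p l \<and> p k \<noteq> p l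
              \<and> v j = 1 \<and> v k = v l \<and> v k \<ge> 1))
     ((p 1 \<noteq> p 2 \<and> p 1 \<noteq> p 3 \<and> p 1 \<noteq> p 4 \<and> p 2 \<noteq> p 3 \<and> p 2 \<noteq> p 4 \<and> p 3 \<noteq> p 4
              \<and> v 1 = 1 \<and> v 2 = 1 \<and> v 3 = 1 \<and> v 4 = 1)
        \<or> (\<exists>i j k l. is_ordering4 i j k l \<and> p i = p j \<and> p j \<noteq> p k \<and> p j \<noteq> p l \<and> p k \<noteq> p l
              \<and> v i = 1 \<and> v j = 1 \<and> v k = 2 \<and> v l = 2)
        \<or> (\<exists>i j k l. is_ordering4 i j k l \<and> v i = 0 \<and> p j \<noteq> p k \<and> p j \<noteq> p l \<and> p k \<noteq> p l
              \<and> v j = 2 \<and> v k = 2 \<and> v l = 2))"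
proof -
  have S: "{1..4::nat} = {1,2,3,4}" by auto
  have sum4: "\<And>f::nat\<Rightarrow>nat. (\<Sum>j\<in>{1,2,3,4}. f j) = f 1 + f 2 + f 3 + f 4" by simp
  have L: "(\<Union>i\<in>{1,2,3,4}. if 0 < v i then {p i} else {}) = {p 1, p 2, p 4}" using P C by auto
  show ?thesis unfolding S sum4 L ex_ord4
    by (rule BLKP_I) ((use P C s in simp; fail) | (use P C F in \<open>auto simp: sum.insert_if\<close>; fail))+
qed

lemma leaf_q14:
  fixes v :: "nat \<Rightarrow> nat" and p :: "nat \<Rightarrow> 'a"
  assumes P: "0 < v 1" "0 < v 2" "0 < v 3" "0 < v 4" and C: "p 1 = p 4" and F: "p 1 \<noteq> p 2" "p 1 \<noteq> p 3" "p 2 \<noteq> p 3" and s: "2 * (v 1 + v 4) < v 1 + v 2 + v 3 + v 4" "2 * (v 2) < v 1 + v 2 + v 3 + v 4" "2 * (v 3) < v 1 + v 2 + v 3 + v 4"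
  shows "BLKP (int (v 1 + v 4)) (int (v 2)) (int (v 3)) (int (0)) (int (\<Sum>j\<in>{1..4}. v j))
     (int (\<Sum>L\<in>(\<Union>i\<in>{1..4}. if 0 < v i then {p i} else {}). (\<Sum>j\<in>{1..4}. if p j = L then v j else 0)^2))
     (int (\<Sum>L\<in>(\<Union>i\<in>{1..4}. if 0 < v i then {p i} else {}). (\<Sum>j\<in>{1..4}. if p j = L then v j else 0)^3))
     ((\<exists>i j k l. is_ordering4 i j k l \<and> p i = p j \<and> p j \<noteq> p k \<and> p j \<noteq> p l \<and> p k \<noteq> p l
              \<and> v i \<ge> 1 \<and> v j \<ge> 1 \<and> v k = 1 \<and> v i + v j = v l)
        \<or> (\<exists>i j k l. is_ordering4 i j k l \<and> v i = 0 \<and> p j \<noteq> p k \<and> p j \<noteq> p l \<and> p k \<noteq> p l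
              \<and> v j = 1 \<and> v k = v l \<and> v k \<ge> 1))
     ((p 1 \<noteq> p 2 \<and> p 1 \<noteq> p 3 \<and> p 1 \<noteq> p 4 \<and> p 2 \<noteq> p 3 \<and> p 2 \<noteq> p 4 \<and> p 3 \<noteq> p 4
              \<and> v 1 = 1 \<and> v 2 = 1 \<and> v 3 = 1 \<and> v 4 = 1)
        \<or> (\<exists>i j k l. is_ordering4 i j k l \<and> p i = p j \<and> p j \<noteq> p k \<and> p j \<noteq> p l \<and> p k \<noteq> p l
              \<and> v i = 1 \<and> v j = 1 \<and> v k = 2 \<and> v l = 2)
        \<or> (\<exists>i j k l. is_ordering4 i j k l \<and> v i = 0 \<and> p j \<noteq> p k \<and> p j \<noteq> p l \<and> p k \<noteq> p l
              \<and> v j = 2 \<and> v k = 2 \<and> v l = 2))"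
proof -
  have S: "{1..4::nat} = {1,2,3,4}" by auto
  have sum4: "\<And>f::nat\<Rightarrow>nat. (\<Sum>j\<in>{1,2,3,4}. f j) = f 1 + f 2 + f 3 + f 4" by simp
  have L: "(\<Union>i\<in>{1,2,3,4}. if 0 < v i then {p i} else {}) = {p 1, p 2, p 3}" using P C by auto
  show ?thesis unfolding S sum4 L ex_ord4
    by (rule BLKP_I) ((use P C s in simp; fail) | (use P C F in \<open>auto simp: sum.insert_if\<close>; fail))+
qed

lemma leaf_q23:
  fixes v :: "nat \<Rightarrow> nat" and p :: "nat \<Rightarrow> 'a"
  assumes P: "0 < v 1" "0 < v 2" "0 < v 3" "0 < v 4" and C: "p 2 = p 3" and F: "p 2 \<noteq> p 1" "p 2 \<noteq> p 4" "p 1 \<noteq> p 4" and s: "2 * (v 2 + v 3) < v 1 + v 2 + v 3 + v 4" "2 * (v 1) < v 1 + v 2 + v 3 + v 4" "2 * (v 4) < v 1 + v 2 + v 3 + v 4"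
  shows "BLKP (int (v 2 + v 3)) (int (v 1)) (int (v 4)) (int (0)) (int (\<Sum>j\<in>{1..4}. v j))
     (int (\<Sum>L\<in>(\<Union>i\<in>{1..4}. if 0 < v i then {p i} else {}). (\<Sum>j\<in>{1..4}. if p j = L then v j else 0)^2))
     (int (\<Sum>L\<in>(\<Union>i\<in>{1..4}. if 0 < v i then {p i} else {}). (\<Sum>j\<in>{1..4}. if p j = L then v j else 0)^3))
     ((\<exists>i j k l. is_ordering4 i j k l \<and> p i = p j \<and> p j \<noteq> p k \<and> p j \<noteq> p l \<and> p k \<noteq> p l
              \<and> v i \<ge> 1 \<and> v j \<ge> 1 \<and> v k = 1 \<and> v i + v j = v l)
        \<or> (\<exists>i j k l. is_ordering4 i j k l \<and> v i = 0 \<and> p j \<noteq> p k \<and> p j \<noteq> p l \<and> p k \<noteq> p l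
              \<and> v j = 1 \<and> v k = v l \<and> v k \<ge> 1))
     ((p 1 \<noteq> p 2 \<and> p 1 \<noteq> p 3 \<and> p 1 \<noteq> p 4 \<and> p 2 \<noteq> p 3 \<and> p 2 \<noteq> p 4 \<and> p 3 \<noteq> p 4
              \<and> v 1 = 1 \<and> v 2 = 1 \<and> v 3 = 1 \<and> v 4 = 1)
        \<or> (\<exists>i j k l. is_ordering4 i j k l \<and> p i = p j \<and> p j \<noteq> p k \<and> p j \<noteq> p l \<and> p k \<noteq> p l
              \<and> v i = 1 \<and> v j = 1 \<and> v k = 2 \<and> v l = 2)
        \<or> (\<exists>i j k l. is_ordering4 i j k l \<and> v i = 0 \<and> p j \<noteq> p k \<and> p j \<noteq> p l \<and> p k \<noteq> p l
              \<and> v j = 2 \<and> v k = 2 \<and> v l = 2))"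
proof -
  have S: "{1..4::nat} = {1,2,3,4}" by auto
  have sum4: "\<And>f::nat\<Rightarrow>nat. (\<Sum>j\<in>{1,2,3,4}. f j) = f 1 + f 2 + f 3 + f 4" by simp
  have L: "(\<Union>i\<in>{1,2,3,4}. if 0 < v i then {p i} else {}) = {p 2, p 1, p 4}" using P C by auto
  show ?thesis unfolding S sum4 L ex_ord4
    by (rule BLKP_I) ((use P C s in simp; fail) | (use P C F in \<open>auto simp: sum.insert_if\<close>; fail))+
qed

lemma leaf_q24:
  fixes v :: "nat \<Rightarrow> nat" and p :: "nat \<Rightarrow> 'a"
  assumes P: "0 < v 1" "0 < v 2" "0 < v 3" "0 < v 4" and C: "p 2 = p 4" and F: "p 2 \<noteq> p 1" "p 2 \<noteq> p 3" "p 1 \<noteq> p 3" and s: "2 * (v 2 + v 4) < v 1 + v 2 + v 3 + v 4" "2 * (v 1) < v 1 + v 2 + v 3 + v 4" "2 * (v 3) < v 1 + v 2 + v 3 + v 4"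
  shows "BLKP (int (v 2 + v 4)) (int (v 1)) (int (v 3)) (int (0)) (int (\<Sum>j\<in>{1..4}. v j))
     (int (\<Sum>L\<in>(\<Union>i\<in>{1..4}. if 0 < v i then {p i} else {}). (\<Sum>j\<in>{1..4}. if p j = L then v j else 0)^2))
     (int (\<Sum>L\<in>(\<Union>i\<in>{1..4}. if 0 < v i then {p i} else {}). (\<Sum>j\<in>{1..4}. if p j = L then v j else 0)^3))
     ((\<exists>i j k l. is_ordering4 i j k l \<and> p i = p j \<and> p j \<noteq> p k \<and> p j \<noteq> p l \<and> p k \<noteq> p l
              \<and> v i \<ge> 1 \<and> v j \<ge> 1 \<and> v k = 1 \<and> v i + v j = v l)
        \<or> (\<exists>i j k l. is_ordering4 i j k l \<and> v i = 0 \<and> p j \<noteq> p k \<and> p j \<noteq> p l \<and> p k \<noteq> p l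
              \<and> v j = 1 \<and> v k = v l \<and> v k \<ge> 1))
     ((p 1 \<noteq> p 2 \<and> p 1 \<noteq> p 3 \<and> p 1 \<noteq> p 4 \<and> p 2 \<noteq> p 3 \<and> p 2 \<noteq> p 4 \<and> p 3 \<noteq> p 4
              \<and> v 1 = 1 \<and> v 2 = 1 \<and> v 3 = 1 \<and> v 4 = 1)
        \<or> (\<exists>i j k l. is_ordering4 i j k l \<and> p i = p j \<and> p j \<noteq> p k \<and> p j \<noteq> p l \<and> p k \<noteq> p l
              \<and> v i = 1 \<and> v j = 1 \<and> v k = 2 \<and> v l = 2)
        \<or> (\<exists>i j k l. is_ordering4 i j k l \<and> v i = 0 \<and> p j \<noteq> p k \<and> p j \<noteq> p l \<and> p k \<noteq> p l
              \<and> v j = 2 \<and> v k = 2 \<and> v l = 2))"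
proof -
  have S: "{1..4::nat} = {1,2,3,4}" by auto
  have sum4: "\<And>f::nat\<Rightarrow>nat. (\<Sum>j\<in>{1,2,3,4}. f j) = f 1 + f 2 + f 3 + f 4" by simp
  have L: "(\<Union>i\<in>{1,2,3,4}. if 0 < v i then {p i} else {}) = {p 2, p 1, p 3}" using P C by auto
  show ?thesis unfolding S sum4 L ex_ord4
    by (rule BLKP_I) ((use P C s in simp; fail) | (use P C F in \<open>auto simp: sum.insert_if\<close>; fail))+
qed

lemma leaf_q34:
  fixes v :: "nat \<Rightarrow> nat" and p :: "nat \<Rightarrow> 'a"
  assumes P: "0 < v 1" "0 < v 2" "0 < v 3" "0 < v 4" and C: "p 3 = p 4" and F: "p 3 \<noteq> p 1" "p 3 \<noteq> p 2" "p 1 \<noteq> p 2" and s: "2 * (v 3 + v 4) < v 1 + v 2 + v 3 + v 4" "2 * (v 1) < v 1 + v 2 + v 3 + v 4" "2 * (v 2) < v 1 + v 2 + v 3 + v 4"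
  shows "BLKP (int (v 3 + v 4)) (int (v 1)) (int (v 2)) (int (0)) (int (\<Sum>j\<in>{1..4}. v j))
     (int (\<Sum>L\<in>(\<Union>i\<in>{1..4}. if 0 < v i then {p i} else {}). (\<Sum>j\<in>{1..4}. if p j = L then v j else 0)^2))
     (int (\<Sum>L\<in>(\<Union>i\<in>{1..4}. if 0 < v i then {p i} else {}). (\<Sum>j\<in>{1..4}. if p j = L then v j else 0)^3))
     ((\<exists>i j k l. is_ordering4 i j k l \<and> p i = p j \<and> p j \<noteq> p k \<and> p j \<noteq> p l \<and> p k \<noteq> p l
              \<and> v i \<ge> 1 \<and> v j \<ge> 1 \<and> v k = 1 \<and> v i + v j = v l)
        \<or> (\<exists>i j k l. is_ordering4 i j k l \<and> v i = 0 \<and> p j \<noteq> p k \<and> p j \<noteq> p l \<and> p k \<noteq> p l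
              \<and> v j = 1 \<and> v k = v l \<and> v k \<ge> 1))
     ((p 1 \<noteq> p 2 \<and> p 1 \<noteq> p 3 \<and> p 1 \<noteq> p 4 \<and> p 2 \<noteq> p 3 \<and> p 2 \<noteq> p 4 \<and> p 3 \<noteq> p 4
              \<and> v 1 = 1 \<and> v 2 = 1 \<and> v 3 = 1 \<and> v 4 = 1)
        \<or> (\<exists>i j k l. is_ordering4 i j k l \<and> p i = p j \<and> p j \<noteq> p k \<and> p j \<noteq> p l \<and> p k \<noteq> p l
              \<and> v i = 1 \<and> v j = 1 \<and> v k = 2 \<and> v l = 2)
        \<or> (\<exists>i j k l. is_ordering4 i j k l \<and> v i = 0 \<and> p j \<noteq> p k \<and> p j \<noteq> p l \<and> p k \<noteq> p l
              \<and> v j = 2 \<and> v k = 2 \<and> v l = 2))"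
proof -
  have S: "{1..4::nat} = {1,2,3,4}" by auto
  have sum4: "\<And>f::nat\<Rightarrow>nat. (\<Sum>j\<in>{1,2,3,4}. f j) = f 1 + f 2 + f 3 + f 4" by simp
  have L: "(\<Union>i\<in>{1,2,3,4}. if 0 < v i then {p i} else {}) = {p 3, p 1, p 2}" using P C by auto
  show ?thesis unfolding S sum4 L ex_ord4
    by (rule BLKP_I) ((use P C s in simp; fail) | (use P C F in \<open>auto simp: sum.insert_if\<close>; fail))+
qed

lemma leaf_dd:
  fixes v :: "nat \<Rightarrow> nat" and p :: "nat \<Rightarrow> 'a"
  assumes P: "0 < v 1" "0 < v 2" "0 < v 3" "0 < v 4" and C: "p 1 \<noteq> p 2" "p 1 \<noteq> p 3" "p 1 \<noteq> p 4" "p 2 \<noteq> p 3" "p 2 \<noteq> p 4" "p 3 \<noteq> p 4" and s: "2 * (v 1) < v 1 + v 2 + v 3 + v 4" "2 * (v 2) < v 1 + v 2 + v 3 + v 4" "2 * (v 3) < v 1 + v 2 + v 3 + v 4" "2 * (v 4) < v 1 + v 2 + v 3 + v 4"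
  shows "BLKP (int (v 1)) (int (v 2)) (int (v 3)) (int (v 4)) (int (\<Sum>j\<in>{1..4}. v j))
     (int (\<Sum>L\<in>(\<Union>i\<in>{1..4}. if 0 < v i then {p i} else {}). (\<Sum>j\<in>{1..4}. if p j = L then v j else 0)^2))
     (int (\<Sum>L\<in>(\<Union>i\<in>{1..4}. if 0 < v i then {p i} else {}). (\<Sum>j\<in>{1..4}. if p j = L then v j else 0)^3))
     ((\<exists>i j k l. is_ordering4 i j k l \<and> p i = p j \<and> p j \<noteq> p k \<and> p j \<noteq> p l \<and> p k \<noteq> p l
              \<and> v i \<ge> 1 \<and> v j \<ge> 1 \<and> v k = 1 \<and> v i + v j = v l)
        \<or> (\<exists>i j k l. is_ordering4 i j k l \<and> v i = 0 \<and> p j \<noteq> p k \<and> p j \<noteq> p l \<and> p k \<noteq> p l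
              \<and> v j = 1 \<and> v k = v l \<and> v k \<ge> 1))
     ((p 1 \<noteq> p 2 \<and> p 1 \<noteq> p 3 \<and> p 1 \<noteq> p 4 \<and> p 2 \<noteq> p 3 \<and> p 2 \<noteq> p 4 \<and> p 3 \<noteq> p 4
              \<and> v 1 = 1 \<and> v 2 = 1 \<and> v 3 = 1 \<and> v 4 = 1)
        \<or> (\<exists>i j k l. is_ordering4 i j k l \<and> p i = p j \<and> p j \<noteq> p k \<and> p j \<noteq> p l \<and> p k \<noteq> p l
              \<and> v i = 1 \<and> v j = 1 \<and> v k = 2 \<and> v l = 2)
        \<or> (\<exists>i j k l. is_ordering4 i j k l \<and> v i = 0 \<and> p j \<noteq> p k \<and> p j \<noteq> p l \<and> p k \<noteq> p l
              \<and> v j = 2 \<and> v k = 2 \<and> v l = 2))"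
proof -
  have S: "{1..4::nat} = {1,2,3,4}" by auto
  have sum4: "\<And>f::nat\<Rightarrow>nat. (\<Sum>j\<in>{1,2,3,4}. f j) = f 1 + f 2 + f 3 + f 4" by simp
  have L: "(\<Union>i\<in>{1,2,3,4}. if 0 < v i then {p i} else {}) = {p 1, p 2, p 3, p 4}" using P C by auto
  show ?thesis unfolding S sum4 L ex_ord4
    by (rule BLKP_I) ((use P C s in simp; fail) | (use P C  in \<open>auto simp: sum.insert_if\<close>; fail))+
qed

lemma pattern:
  fixes v :: "nat \<Rightarrow> nat" and p :: "nat \<Rightarrow> 'a"
  assumes stab: "\<And>i. i \<in> {1..4} \<Longrightarrow> 0 < v i \<Longrightarrow> 2 * (\<Sum>j\<in>{1..4}. if p j = p i then v j else 0) < (\<Sum>j\<in>{1..4}. v j)"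
    and Vpos: "0 < (\<Sum>j\<in>{1..4}. v j)"
  shows "\<exists>a b c d. BLKP a b c d (int (\<Sum>j\<in>{1..4}. v j))
     (int (\<Sum>L\<in>(\<Union>i\<in>{1..4}. if 0 < v i then {p i} else {}). (\<Sum>j\<in>{1..4}. if p j = L then v j else 0)^2))
     (int (\<Sum>L\<in>(\<Union>i\<in>{1..4}. if 0 < v i then {p i} else {}). (\<Sum>j\<in>{1..4}. if p j = L then v j else 0)^3))
     ((\<exists>i j k l. is_ordering4 i j k l \<and> p i = p j \<and> p j \<noteq> p k \<and> p j \<noteq> p l \<and> p k \<noteq> p l
              \<and> v i \<ge> 1 \<and> v j \<ge> 1 \<and> v k = 1 \<and> v i + v j = v l)
        \<or> (\<exists>i j k l. is_ordering4 i j k l \<and> v i = 0 \<and> p j \<noteq> p k \<and> p j \<noteq> p l \<and> p k \<noteq> p l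
              \<and> v j = 1 \<and> v k = v l \<and> v k \<ge> 1))
     ((p 1 \<noteq> p 2 \<and> p 1 \<noteq> p 3 \<and> p 1 \<noteq> p 4 \<and> p 2 \<noteq> p 3 \<and> p 2 \<noteq> p 4 \<and> p 3 \<noteq> p 4
              \<and> v 1 = 1 \<and> v 2 = 1 \<and> v 3 = 1 \<and> v 4 = 1)
        \<or> (\<exists>i j k l. is_ordering4 i j k l \<and> p i = p j \<and> p j \<noteq> p k \<and> p j \<noteq> p l \<and> p k \<noteq> p l
              \<and> v i = 1 \<and> v j = 1 \<and> v k = 2 \<and> v l = 2)
        \<or> (\<exists>i j k l. is_ordering4 i j k l \<and> v i = 0 \<and> p j \<noteq> p k \<and> p j \<noteq> p l \<and> p k \<noteq> p l
              \<and> v j = 2 \<and> v k = 2 \<and> v l = 2))"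
proof -
  have S: "{1..4::nat} = {1,2,3,4}" by auto
  have sum4: "\<And>f::nat\<Rightarrow>nat. (\<Sum>j\<in>{1,2,3,4}. f j) = f 1 + f 2 + f 3 + f 4" by simp
  have m: "1 \<in> {1..4::nat}" "2 \<in> {1..4::nat}" "3 \<in> {1..4::nat}" "4 \<in> {1..4::nat}" by auto
  have s1: "0 < v 1 \<Longrightarrow> 2 * ((if p 1 = p 1 then v 1 else 0) + (if p 2 = p 1 then v 2 else 0) + (if p 3 = p 1 then v 3 else 0) + (if p 4 = p 1 then v 4 else 0)) < v 1 + v 2 + v 3 + v 4"
    using stab[OF m(1)] unfolding S sum4 by assumption
  have s2: "0 < v 2 \<Longrightarrow> 2 * ((if p 1 = p 2 then v 1 else 0) + (if p 2 = p 2 then v 2 else 0) + (if p 3 = p 2 then v 3 else 0) + (if p 4 = p 2 then v 4 else 0)) < v 1 + v 2 + v 3 + v 4"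
    using stab[OF m(2)] unfolding S sum4 by assumption
  have s3: "0 < v 3 \<Longrightarrow> 2 * ((if p 1 = p 3 then v 1 else 0) + (if p 2 = p 3 then v 2 else 0) + (if p 3 = p 3 then v 3 else 0) + (if p 4 = p 3 then v 4 else 0)) < v 1 + v 2 + v 3 + v 4"
    using stab[OF m(3)] unfolding S sum4 by assumption
  have s4: "0 < v 4 \<Longrightarrow> 2 * ((if p 1 = p 4 then v 1 else 0) + (if p 2 = p 4 then v 2 else 0) + (if p 3 = p 4 then v 3 else 0) + (if p 4 = p 4 then v 4 else 0)) < v 1 + v 2 + v 3 + v 4"
    using stab[OF m(4)] unfolding S sum4 by assumption
  have V0: "0 < v 1 + v 2 + v 3 + v 4" using Vpos unfolding S sum4 by assumption
  consider (Z) "v 1 = 0 \<or> v 2 = 0 \<or> v 3 = 0 \<or> v 4 = 0" | (P) "0 < v 1" "0 < v 2" "0 < v 3" "0 < v 4" by auto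
  thus ?thesis
  proof cases
    case Z
    then consider (z1) "v 1 = 0" | (z2) "v 2 = 0" | (z3) "v 3 = 0" | (z4) "v 4 = 0" by auto
    thus ?thesis
    proof cases
      case z1
      have F: "0 < v 2 \<and> 0 < v 3 \<and> 0 < v 4 \<and> p 2 \<noteq> p 3 \<and> p 2 \<noteq> p 4 \<and> p 3 \<noteq> p 4"
        using s1 s2 s3 s4 V0  z1 by (cases "p 2 = p 3"; cases "p 2 = p 4"; cases "p 3 = p 4"; cases "v 2 = 0"; cases "v 3 = 0"; cases "v 4 = 0") auto
      have st0: "2 * (v 2) < v 1 + v 2 + v 3 + v 4" using s1 s2 s3 s4 V0  z1 F by simp
      have st1: "2 * (v 3) < v 1 + v 2 + v 3 + v 4" using s1 s2 s3 s4 V0  z1 F by simp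
      have st2: "2 * (v 4) < v 1 + v 2 + v 3 + v 4" using s1 s2 s3 s4 V0  z1 F by simp
      have "BLKP (int (v 2)) (int (v 3)) (int (v 4)) (int (0)) (int (\<Sum>j\<in>{1..4}. v j))
     (int (\<Sum>L\<in>(\<Union>i\<in>{1..4}. if 0 < v i then {p i} else {}). (\<Sum>j\<in>{1..4}. if p j = L then v j else 0)^2))
     (int (\<Sum>L\<in>(\<Union>i\<in>{1..4}. if 0 < v i then {p i} else {}). (\<Sum>j\<in>{1..4}. if p j = L then v j else 0)^3))
     ((\<exists>i j k l. is_ordering4 i j k l \<and> p i = p j \<and> p j \<noteq> p k \<and> p j \<noteq> p l \<and> p k \<noteq> p l
              \<and> v i \<ge> 1 \<and> v j \<ge> 1 \<and> v k = 1 \<and> v i + v j = v l)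
        \<or> (\<exists>i j k l. is_ordering4 i j k l \<and> v i = 0 \<and> p j \<noteq> p k \<and> p j \<noteq> p l \<and> p k \<noteq> p l
              \<and> v j = 1 \<and> v k = v l \<and> v k \<ge> 1))
     ((p 1 \<noteq> p 2 \<and> p 1 \<noteq> p 3 \<and> p 1 \<noteq> p 4 \<and> p 2 \<noteq> p 3 \<and> p 2 \<noteq> p 4 \<and> p 3 \<noteq> p 4
              \<and> v 1 = 1 \<and> v 2 = 1 \<and> v 3 = 1 \<and> v 4 = 1)
        \<or> (\<exists>i j k l. is_ordering4 i j k l \<and> p i = p j \<and> p j \<noteq> p k \<and> p j \<noteq> p l \<and> p k \<noteq> p l
              \<and> v i = 1 \<and> v j = 1 \<and> v k = 2 \<and> v l = 2)
        \<or> (\<exists>i j k l. is_ordering4 i j k l \<and> v i = 0 \<and> p j \<noteq> p k \<and> p j \<noteq> p l \<and> p k \<noteq> p l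
              \<and> v j = 2 \<and> v k = 2 \<and> v l = 2))"
        by (rule leaf_z1) (use F  z1 st0 st1 st2 in simp_all)
      thus ?thesis by blast
    next
      case z2
      have F: "0 < v 1 \<and> 0 < v 3 \<and> 0 < v 4 \<and> p 1 \<noteq> p 3 \<and> p 1 \<noteq> p 4 \<and> p 3 \<noteq> p 4"
        using s1 s2 s3 s4 V0  z2 by (cases "p 1 = p 3"; cases "p 1 = p 4"; cases "p 3 = p 4"; cases "v 1 = 0"; cases "v 3 = 0"; cases "v 4 = 0") auto
      have st0: "2 * (v 1) < v 1 + v 2 + v 3 + v 4" using s1 s2 s3 s4 V0  z2 F by simp
      have st1: "2 * (v 3) < v 1 + v 2 + v 3 + v 4" using s1 s2 s3 s4 V0  z2 F by simp
      have st2: "2 * (v 4) < v 1 + v 2 + v 3 + v 4" using s1 s2 s3 s4 V0  z2 F by simp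
      have "BLKP (int (v 1)) (int (v 3)) (int (v 4)) (int (0)) (int (\<Sum>j\<in>{1..4}. v j))
     (int (\<Sum>L\<in>(\<Union>i\<in>{1..4}. if 0 < v i then {p i} else {}). (\<Sum>j\<in>{1..4}. if p j = L then v j else 0)^2))
     (int (\<Sum>L\<in>(\<Union>i\<in>{1..4}. if 0 < v i then {p i} else {}). (\<Sum>j\<in>{1..4}. if p j = L then v j else 0)^3))
     ((\<exists>i j k l. is_ordering4 i j k l \<and> p i = p j \<and> p j \<noteq> p k \<and> p j \<noteq> p l \<and> p k \<noteq> p l
              \<and> v i \<ge> 1 \<and> v j \<ge> 1 \<and> v k = 1 \<and> v i + v j = v l)
        \<or> (\<exists>i j k l. is_ordering4 i j k l \<and> v i = 0 \<and> p j \<noteq> p k \<and> p j \<noteq> p l \<and> p k \<noteq> p l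
              \<and> v j = 1 \<and> v k = v l \<and> v k \<ge> 1))
     ((p 1 \<noteq> p 2 \<and> p 1 \<noteq> p 3 \<and> p 1 \<noteq> p 4 \<and> p 2 \<noteq> p 3 \<and> p 2 \<noteq> p 4 \<and> p 3 \<noteq> p 4
              \<and> v 1 = 1 \<and> v 2 = 1 \<and> v 3 = 1 \<and> v 4 = 1)
        \<or> (\<exists>i j k l. is_ordering4 i j k l \<and> p i = p j \<and> p j \<noteq> p k \<and> p j \<noteq> p l \<and> p k \<noteq> p l
              \<and> v i = 1 \<and> v j = 1 \<and> v k = 2 \<and> v l = 2)
        \<or> (\<exists>i j k l. is_ordering4 i j k l \<and> v i = 0 \<and> p j \<noteq> p k \<and> p j \<noteq> p l \<and> p k \<noteq> p l
              \<and> v j = 2 \<and> v k = 2 \<and> v l = 2))"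
        by (rule leaf_z2) (use F  z2 st0 st1 st2 in simp_all)
      thus ?thesis by blast
    next
      case z3
      have F: "0 < v 1 \<and> 0 < v 2 \<and> 0 < v 4 \<and> p 1 \<noteq> p 2 \<and> p 1 \<noteq> p 4 \<and> p 2 \<noteq> p 4"
        using s1 s2 s3 s4 V0  z3 by (cases "p 1 = p 2"; cases "p 1 = p 4"; cases "p 2 = p 4"; cases "v 1 = 0"; cases "v 2 = 0"; cases "v 4 = 0") auto
      have st0: "2 * (v 1) < v 1 + v 2 + v 3 + v 4" using s1 s2 s3 s4 V0  z3 F by simp
      have st1: "2 * (v 2) < v 1 + v 2 + v 3 + v 4" using s1 s2 s3 s4 V0  z3 F by simp
      have st2: "2 * (v 4) < v 1 + v 2 + v 3 + v 4" using s1 s2 s3 s4 V0  z3 F by simp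
      have "BLKP (int (v 1)) (int (v 2)) (int (v 4)) (int (0)) (int (\<Sum>j\<in>{1..4}. v j))
     (int (\<Sum>L\<in>(\<Union>i\<in>{1..4}. if 0 < v i then {p i} else {}). (\<Sum>j\<in>{1..4}. if p j = L then v j else 0)^2))
     (int (\<Sum>L\<in>(\<Union>i\<in>{1..4}. if 0 < v i then {p i} else {}). (\<Sum>j\<in>{1..4}. if p j = L then v j else 0)^3))
     ((\<exists>i j k l. is_ordering4 i j k l \<and> p i = p j \<and> p j \<noteq> p k \<and> p j \<noteq> p l \<and> p k \<noteq> p l
              \<and> v i \<ge> 1 \<and> v j \<ge> 1 \<and> v k = 1 \<and> v i + v j = v l)
        \<or> (\<exists>i j k l. is_ordering4 i j k l \<and> v i = 0 \<and> p j \<noteq> p k \<and> p j \<noteq> p l \<and> p k \<noteq> p l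
              \<and> v j = 1 \<and> v k = v l \<and> v k \<ge> 1))
     ((p 1 \<noteq> p 2 \<and> p 1 \<noteq> p 3 \<and> p 1 \<noteq> p 4 \<and> p 2 \<noteq> p 3 \<and> p 2 \<noteq> p 4 \<and> p 3 \<noteq> p 4
              \<and> v 1 = 1 \<and> v 2 = 1 \<and> v 3 = 1 \<and> v 4 = 1)
        \<or> (\<exists>i j k l. is_ordering4 i j k l \<and> p i = p j \<and> p j \<noteq> p k \<and> p j \<noteq> p l \<and> p k \<noteq> p l
              \<and> v i = 1 \<and> v j = 1 \<and> v k = 2 \<and> v l = 2)
        \<or> (\<exists>i j k l. is_ordering4 i j k l \<and> v i = 0 \<and> p j \<noteq> p k \<and> p j \<noteq> p l \<and> p k \<noteq> p l
              \<and> v j = 2 \<and> v k = 2 \<and> v l = 2))"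
        by (rule leaf_z3) (use F  z3 st0 st1 st2 in simp_all)
      thus ?thesis by blast
    next
      case z4
      have F: "0 < v 1 \<and> 0 < v 2 \<and> 0 < v 3 \<and> p 1 \<noteq> p 2 \<and> p 1 \<noteq> p 3 \<and> p 2 \<noteq> p 3"
        using s1 s2 s3 s4 V0  z4 by (cases "p 1 = p 2"; cases "p 1 = p 3"; cases "p 2 = p 3"; cases "v 1 = 0"; cases "v 2 = 0"; cases "v 3 = 0") auto
      have st0: "2 * (v 1) < v 1 + v 2 + v 3 + v 4" using s1 s2 s3 s4 V0  z4 F by simp
      have st1: "2 * (v 2) < v 1 + v 2 + v 3 + v 4" using s1 s2 s3 s4 V0  z4 F by simp
      have st2: "2 * (v 3) < v 1 + v 2 + v 3 + v 4" using s1 s2 s3 s4 V0  z4 F by simp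
      have "BLKP (int (v 1)) (int (v 2)) (int (v 3)) (int (0)) (int (\<Sum>j\<in>{1..4}. v j))
     (int (\<Sum>L\<in>(\<Union>i\<in>{1..4}. if 0 < v i then {p i} else {}). (\<Sum>j\<in>{1..4}. if p j = L then v j else 0)^2))
     (int (\<Sum>L\<in>(\<Union>i\<in>{1..4}. if 0 < v i then {p i} else {}). (\<Sum>j\<in>{1..4}. if p j = L then v j else 0)^3))
     ((\<exists>i j k l. is_ordering4 i j k l \<and> p i = p j \<and> p j \<noteq> p k \<and> p j \<noteq> p l \<and> p k \<noteq> p l
              \<and> v i \<ge> 1 \<and> v j \<ge> 1 \<and> v k = 1 \<and> v i + v j = v l)
        \<or> (\<exists>i j k l. is_ordering4 i j k l \<and> v i = 0 \<and> p j \<noteq> p k \<and> p j \<noteq> p l \<and> p k \<noteq> p l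
              \<and> v j = 1 \<and> v k = v l \<and> v k \<ge> 1))
     ((p 1 \<noteq> p 2 \<and> p 1 \<noteq> p 3 \<and> p 1 \<noteq> p 4 \<and> p 2 \<noteq> p 3 \<and> p 2 \<noteq> p 4 \<and> p 3 \<noteq> p 4
              \<and> v 1 = 1 \<and> v 2 = 1 \<and> v 3 = 1 \<and> v 4 = 1)
        \<or> (\<exists>i j k l. is_ordering4 i j k l \<and> p i = p j \<and> p j \<noteq> p k \<and> p j \<noteq> p l \<and> p k \<noteq> p l
              \<and> v i = 1 \<and> v j = 1 \<and> v k = 2 \<and> v l = 2)
        \<or> (\<exists>i j k l. is_ordering4 i j k l \<and> v i = 0 \<and> p j \<noteq> p k \<and> p j \<noteq> p l \<and> p k \<noteq> p l
              \<and> v j = 2 \<and> v k = 2 \<and> v l = 2))"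
        by (rule leaf_z4) (use F  z4 st0 st1 st2 in simp_all)
      thus ?thesis by blast
    qed
  next
    case P
    consider (q12) "p 1 = p 2" | (q13) "p 1 = p 3" | (q14) "p 1 = p 4" | (q23) "p 2 = p 3" | (q24) "p 2 = p 4" | (q34) "p 3 = p 4" | (dd) "p 1 \<noteq> p 2 \<and> p 1 \<noteq> p 3 \<and> p 1 \<noteq> p 4 \<and> p 2 \<noteq> p 3 \<and> p 2 \<noteq> p 4 \<and> p 3 \<noteq> p 4" by blast
    thus ?thesis
    proof cases
      case q12
      have F: "p 1 \<noteq> p 3 \<and> p 1 \<noteq> p 4 \<and> p 3 \<noteq> p 4"
        using s1 s2 s3 s4 V0 P q12 by (cases "p 1 = p 3"; cases "p 1 = p 4"; cases "p 3 = p 4") auto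
      have st0: "2 * (v 1 + v 2) < v 1 + v 2 + v 3 + v 4" using s1 s2 s3 s4 V0 P q12 F by simp
      have st1: "2 * (v 3) < v 1 + v 2 + v 3 + v 4" using s1 s2 s3 s4 V0 P q12 F by simp
      have st2: "2 * (v 4) < v 1 + v 2 + v 3 + v 4" using s1 s2 s3 s4 V0 P q12 F by simp
      have "BLKP (int (v 1 + v 2)) (int (v 3)) (int (v 4)) (int (0)) (int (\<Sum>j\<in>{1..4}. v j))
     (int (\<Sum>L\<in>(\<Union>i\<in>{1..4}. if 0 < v i then {p i} else {}). (\<Sum>j\<in>{1..4}. if p j = L then v j else 0)^2))
     (int (\<Sum>L\<in>(\<Union>i\<in>{1..4}. if 0 < v i then {p i} else {}). (\<Sum>j\<in>{1..4}. if p j = L then v j else 0)^3))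
     ((\<exists>i j k l. is_ordering4 i j k l \<and> p i = p j \<and> p j \<noteq> p k \<and> p j \<noteq> p l \<and> p k \<noteq> p l
              \<and> v i \<ge> 1 \<and> v j \<ge> 1 \<and> v k = 1 \<and> v i + v j = v l)
        \<or> (\<exists>i j k l. is_ordering4 i j k l \<and> v i = 0 \<and> p j \<noteq> p k \<and> p j \<noteq> p l \<and> p k \<noteq> p l
              \<and> v j = 1 \<and> v k = v l \<and> v k \<ge> 1))
     ((p 1 \<noteq> p 2 \<and> p 1 \<noteq> p 3 \<and> p 1 \<noteq> p 4 \<and> p 2 \<noteq> p 3 \<and> p 2 \<noteq> p 4 \<and> p 3 \<noteq> p 4
              \<and> v 1 = 1 \<and> v 2 = 1 \<and> v 3 = 1 \<and> v 4 = 1)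
        \<or> (\<exists>i j k l. is_ordering4 i j k l \<and> p i = p j \<and> p j \<noteq> p k \<and> p j \<noteq> p l \<and> p k \<noteq> p l
              \<and> v i = 1 \<and> v j = 1 \<and> v k = 2 \<and> v l = 2)
        \<or> (\<exists>i j k l. is_ordering4 i j k l \<and> v i = 0 \<and> p j \<noteq> p k \<and> p j \<noteq> p l \<and> p k \<noteq> p l
              \<and> v j = 2 \<and> v k = 2 \<and> v l = 2))"
        by (rule leaf_q12) (use F P q12 st0 st1 st2 in simp_all)
      thus ?thesis by blast
    next
      case q13
      have F: "p 1 \<noteq> p 2 \<and> p 1 \<noteq> p 4 \<and> p 2 \<noteq> p 4"
        using s1 s2 s3 s4 V0 P q13 by (cases "p 1 = p 2"; cases "p 1 = p 4"; cases "p 2 = p 4") auto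
      have st0: "2 * (v 1 + v 3) < v 1 + v 2 + v 3 + v 4" using s1 s2 s3 s4 V0 P q13 F by simp
      have st1: "2 * (v 2) < v 1 + v 2 + v 3 + v 4" using s1 s2 s3 s4 V0 P q13 F by simp
      have st2: "2 * (v 4) < v 1 + v 2 + v 3 + v 4" using s1 s2 s3 s4 V0 P q13 F by simp
      have "BLKP (int (v 1 + v 3)) (int (v 2)) (int (v 4)) (int (0)) (int (\<Sum>j\<in>{1..4}. v j))
     (int (\<Sum>L\<in>(\<Union>i\<in>{1..4}. if 0 < v i then {p i} else {}). (\<Sum>j\<in>{1..4}. if p j = L then v j else 0)^2))
     (int (\<Sum>L\<in>(\<Union>i\<in>{1..4}. if 0 < v i then {p i} else {}). (\<Sum>j\<in>{1..4}. if p j = L then v j else 0)^3))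
     ((\<exists>i j k l. is_ordering4 i j k l \<and> p i = p j \<and> p j \<noteq> p k \<and> p j \<noteq> p l \<and> p k \<noteq> p l
              \<and> v i \<ge> 1 \<and> v j \<ge> 1 \<and> v k = 1 \<and> v i + v j = v l)
        \<or> (\<exists>i j k l. is_ordering4 i j k l \<and> v i = 0 \<and> p j \<noteq> p k \<and> p j \<noteq> p l \<and> p k \<noteq> p l
              \<and> v j = 1 \<and> v k = v l \<and> v k \<ge> 1))
     ((p 1 \<noteq> p 2 \<and> p 1 \<noteq> p 3 \<and> p 1 \<noteq> p 4 \<and> p 2 \<noteq> p 3 \<and> p 2 \<noteq> p 4 \<and> p 3 \<noteq> p 4
              \<and> v 1 = 1 \<and> v 2 = 1 \<and> v 3 = 1 \<and> v 4 = 1)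
        \<or> (\<exists>i j k l. is_ordering4 i j k l \<and> p i = p j \<and> p j \<noteq> p k \<and> p j \<noteq> p l \<and> p k \<noteq> p l
              \<and> v i = 1 \<and> v j = 1 \<and> v k = 2 \<and> v l = 2)
        \<or> (\<exists>i j k l. is_ordering4 i j k l \<and> v i = 0 \<and> p j \<noteq> p k \<and> p j \<noteq> p l \<and> p k \<noteq> p l
              \<and> v j = 2 \<and> v k = 2 \<and> v l = 2))"
        by (rule leaf_q13) (use F P q13 st0 st1 st2 in simp_all)
      thus ?thesis by blast
    next
      case q14
      have F: "p 1 \<noteq> p 2 \<and> p 1 \<noteq> p 3 \<and> p 2 \<noteq> p 3"
        using s1 s2 s3 s4 V0 P q14 by (cases "p 1 = p 2"; cases "p 1 = p 3"; cases "p 2 = p 3") auto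
      have st0: "2 * (v 1 + v 4) < v 1 + v 2 + v 3 + v 4" using s1 s2 s3 s4 V0 P q14 F by simp
      have st1: "2 * (v 2) < v 1 + v 2 + v 3 + v 4" using s1 s2 s3 s4 V0 P q14 F by simp
      have st2: "2 * (v 3) < v 1 + v 2 + v 3 + v 4" using s1 s2 s3 s4 V0 P q14 F by simp
      have "BLKP (int (v 1 + v 4)) (int (v 2)) (int (v 3)) (int (0)) (int (\<Sum>j\<in>{1..4}. v j))
     (int (\<Sum>L\<in>(\<Union>i\<in>{1..4}. if 0 < v i then {p i} else {}). (\<Sum>j\<in>{1..4}. if p j = L then v j else 0)^2))
     (int (\<Sum>L\<in>(\<Union>i\<in>{1..4}. if 0 < v i then {p i} else {}). (\<Sum>j\<in>{1..4}. if p j = L then v j else 0)^3))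
     ((\<exists>i j k l. is_ordering4 i j k l \<and> p i = p j \<and> p j \<noteq> p k \<and> p j \<noteq> p l \<and> p k \<noteq> p l
              \<and> v i \<ge> 1 \<and> v j \<ge> 1 \<and> v k = 1 \<and> v i + v j = v l)
        \<or> (\<exists>i j k l. is_ordering4 i j k l \<and> v i = 0 \<and> p j \<noteq> p k \<and> p j \<noteq> p l \<and> p k \<noteq> p l
              \<and> v j = 1 \<and> v k = v l \<and> v k \<ge> 1))
     ((p 1 \<noteq> p 2 \<and> p 1 \<noteq> p 3 \<and> p 1 \<noteq> p 4 \<and> p 2 \<noteq> p 3 \<and> p 2 \<noteq> p 4 \<and> p 3 \<noteq> p 4
              \<and> v 1 = 1 \<and> v 2 = 1 \<and> v 3 = 1 \<and> v 4 = 1)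
        \<or> (\<exists>i j k l. is_ordering4 i j k l \<and> p i = p j \<and> p j \<noteq> p k \<and> p j \<noteq> p l \<and> p k \<noteq> p l
              \<and> v i = 1 \<and> v j = 1 \<and> v k = 2 \<and> v l = 2)
        \<or> (\<exists>i j k l. is_ordering4 i j k l \<and> v i = 0 \<and> p j \<noteq> p k \<and> p j \<noteq> p l \<and> p k \<noteq> p l
              \<and> v j = 2 \<and> v k = 2 \<and> v l = 2))"
        by (rule leaf_q14) (use F P q14 st0 st1 st2 in simp_all)
      thus ?thesis by blast
    next
      case q23
      have F: "p 2 \<noteq> p 1 \<and> p 2 \<noteq> p 4 \<and> p 1 \<noteq> p 4"
        using s1 s2 s3 s4 V0 P q23 by (cases "p 2 = p 1"; cases "p 2 = p 4"; cases "p 1 = p 4") auto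
      have st0: "2 * (v 2 + v 3) < v 1 + v 2 + v 3 + v 4" using s1 s2 s3 s4 V0 P q23 F by simp
      have st1: "2 * (v 1) < v 1 + v 2 + v 3 + v 4" using s1 s2 s3 s4 V0 P q23 F by simp
      have st2: "2 * (v 4) < v 1 + v 2 + v 3 + v 4" using s1 s2 s3 s4 V0 P q23 F by simp
      have "BLKP (int (v 2 + v 3)) (int (v 1)) (int (v 4)) (int (0)) (int (\<Sum>j\<in>{1..4}. v j))
     (int (\<Sum>L\<in>(\<Union>i\<in>{1..4}. if 0 < v i then {p i} else {}). (\<Sum>j\<in>{1..4}. if p j = L then v j else 0)^2))
     (int (\<Sum>L\<in>(\<Union>i\<in>{1..4}. if 0 < v i then {p i} else {}). (\<Sum>j\<in>{1..4}. if p j = L then v j else 0)^3))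
     ((\<exists>i j k l. is_ordering4 i j k l \<and> p i = p j \<and> p j \<noteq> p k \<and> p j \<noteq> p l \<and> p k \<noteq> p l
              \<and> v i \<ge> 1 \<and> v j \<ge> 1 \<and> v k = 1 \<and> v i + v j = v l)
        \<or> (\<exists>i j k l. is_ordering4 i j k l \<and> v i = 0 \<and> p j \<noteq> p k \<and> p j \<noteq> p l \<and> p k \<noteq> p l
              \<and> v j = 1 \<and> v k = v l \<and> v k \<ge> 1))
     ((p 1 \<noteq> p 2 \<and> p 1 \<noteq> p 3 \<and> p 1 \<noteq> p 4 \<and> p 2 \<noteq> p 3 \<and> p 2 \<noteq> p 4 \<and> p 3 \<noteq> p 4
              \<and> v 1 = 1 \<and> v 2 = 1 \<and> v 3 = 1 \<and> v 4 = 1)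
        \<or> (\<exists>i j k l. is_ordering4 i j k l \<and> p i = p j \<and> p j \<noteq> p k \<and> p j \<noteq> p l \<and> p k \<noteq> p l
              \<and> v i = 1 \<and> v j = 1 \<and> v k = 2 \<and> v l = 2)
        \<or> (\<exists>i j k l. is_ordering4 i j k l \<and> v i = 0 \<and> p j \<noteq> p k \<and> p j \<noteq> p l \<and> p k \<noteq> p l
              \<and> v j = 2 \<and> v k = 2 \<and> v l = 2))"
        by (rule leaf_q23) (use F P q23 st0 st1 st2 in simp_all)
      thus ?thesis by blast
    next
      case q24
      have F: "p 2 \<noteq> p 1 \<and> p 2 \<noteq> p 3 \<and> p 1 \<noteq> p 3"
        using s1 s2 s3 s4 V0 P q24 by (cases "p 2 = p 1"; cases "p 2 = p 3"; cases "p 1 = p 3") auto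
      have st0: "2 * (v 2 + v 4) < v 1 + v 2 + v 3 + v 4" using s1 s2 s3 s4 V0 P q24 F by simp
      have st1: "2 * (v 1) < v 1 + v 2 + v 3 + v 4" using s1 s2 s3 s4 V0 P q24 F by simp
      have st2: "2 * (v 3) < v 1 + v 2 + v 3 + v 4" using s1 s2 s3 s4 V0 P q24 F by simp
      have "BLKP (int (v 2 + v 4)) (int (v 1)) (int (v 3)) (int (0)) (int (\<Sum>j\<in>{1..4}. v j))
     (int (\<Sum>L\<in>(\<Union>i\<in>{1..4}. if 0 < v i then {p i} else {}). (\<Sum>j\<in>{1..4}. if p j = L then v j else 0)^2))
     (int (\<Sum>L\<in>(\<Union>i\<in>{1..4}. if 0 < v i then {p i} else {}). (\<Sum>j\<in>{1..4}. if p j = L then v j else 0)^3))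
     ((\<exists>i j k l. is_ordering4 i j k l \<and> p i = p j \<and> p j \<noteq> p k \<and> p j \<noteq> p l \<and> p k \<noteq> p l
              \<and> v i \<ge> 1 \<and> v j \<ge> 1 \<and> v k = 1 \<and> v i + v j = v l)
        \<or> (\<exists>i j k l. is_ordering4 i j k l \<and> v i = 0 \<and> p j \<noteq> p k \<and> p j \<noteq> p l \<and> p k \<noteq> p l
              \<and> v j = 1 \<and> v k = v l \<and> v k \<ge> 1))
     ((p 1 \<noteq> p 2 \<and> p 1 \<noteq> p 3 \<and> p 1 \<noteq> p 4 \<and> p 2 \<noteq> p 3 \<and> p 2 \<noteq> p 4 \<and> p 3 \<noteq> p 4
              \<and> v 1 = 1 \<and> v 2 = 1 \<and> v 3 = 1 \<and> v 4 = 1)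
        \<or> (\<exists>i j k l. is_ordering4 i j k l \<and> p i = p j \<and> p j \<noteq> p k \<and> p j \<noteq> p l \<and> p k \<noteq> p l
              \<and> v i = 1 \<and> v j = 1 \<and> v k = 2 \<and> v l = 2)
        \<or> (\<exists>i j k l. is_ordering4 i j k l \<and> v i = 0 \<and> p j \<noteq> p k \<and> p j \<noteq> p l \<and> p k \<noteq> p l
              \<and> v j = 2 \<and> v k = 2 \<and> v l = 2))"
        by (rule leaf_q24) (use F P q24 st0 st1 st2 in simp_all)
      thus ?thesis by blast
    next
      case q34
      have F: "p 3 \<noteq> p 1 \<and> p 3 \<noteq> p 2 \<and> p 1 \<noteq> p 2"
        using s1 s2 s3 s4 V0 P q34 by (cases "p 3 = p 1"; cases "p 3 = p 2"; cases "p 1 = p 2") auto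
      have st0: "2 * (v 3 + v 4) < v 1 + v 2 + v 3 + v 4" using s1 s2 s3 s4 V0 P q34 F by simp
      have st1: "2 * (v 1) < v 1 + v 2 + v 3 + v 4" using s1 s2 s3 s4 V0 P q34 F by simp
      have st2: "2 * (v 2) < v 1 + v 2 + v 3 + v 4" using s1 s2 s3 s4 V0 P q34 F by simp
      have "BLKP (int (v 3 + v 4)) (int (v 1)) (int (v 2)) (int (0)) (int (\<Sum>j\<in>{1..4}. v j))
     (int (\<Sum>L\<in>(\<Union>i\<in>{1..4}. if 0 < v i then {p i} else {}). (\<Sum>j\<in>{1..4}. if p j = L then v j else 0)^2))
     (int (\<Sum>L\<in>(\<Union>i\<in>{1..4}. if 0 < v i then {p i} else {}). (\<Sum>j\<in>{1..4}. if p j = L then v j else 0)^3))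
     ((\<exists>i j k l. is_ordering4 i j k l \<and> p i = p j \<and> p j \<noteq> p k \<and> p j \<noteq> p l \<and> p k \<noteq> p l
              \<and> v i \<ge> 1 \<and> v j \<ge> 1 \<and> v k = 1 \<and> v i + v j = v l)
        \<or> (\<exists>i j k l. is_ordering4 i j k l \<and> v i = 0 \<and> p j \<noteq> p k \<and> p j \<noteq> p l \<and> p k \<noteq> p l
              \<and> v j = 1 \<and> v k = v l \<and> v k \<ge> 1))
     ((p 1 \<noteq> p 2 \<and> p 1 \<noteq> p 3 \<and> p 1 \<noteq> p 4 \<and> p 2 \<noteq> p 3 \<and> p 2 \<noteq> p 4 \<and> p 3 \<noteq> p 4
              \<and> v 1 = 1 \<and> v 2 = 1 \<and> v 3 = 1 \<and> v 4 = 1)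
        \<or> (\<exists>i j k l. is_ordering4 i j k l \<and> p i = p j \<and> p j \<noteq> p k \<and> p j \<noteq> p l \<and> p k \<noteq> p l
              \<and> v i = 1 \<and> v j = 1 \<and> v k = 2 \<and> v l = 2)
        \<or> (\<exists>i j k l. is_ordering4 i j k l \<and> v i = 0 \<and> p j \<noteq> p k \<and> p j \<noteq> p l \<and> p k \<noteq> p l
              \<and> v j = 2 \<and> v k = 2 \<and> v l = 2))"
        by (rule leaf_q34) (use F P q34 st0 st1 st2 in simp_all)
      thus ?thesis by blast
    next
      case dd
      note F = TrueI
      have st0: "2 * (v 1) < v 1 + v 2 + v 3 + v 4" using s1 s2 s3 s4 V0 P dd F by simp
      have st1: "2 * (v 2) < v 1 + v 2 + v 3 + v 4" using s1 s2 s3 s4 V0 P dd F by simp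
      have st2: "2 * (v 3) < v 1 + v 2 + v 3 + v 4" using s1 s2 s3 s4 V0 P dd F by simp
      have st3: "2 * (v 4) < v 1 + v 2 + v 3 + v 4" using s1 s2 s3 s4 V0 P dd F by simp
      have "BLKP (int (v 1)) (int (v 2)) (int (v 3)) (int (v 4)) (int (\<Sum>j\<in>{1..4}. v j))
     (int (\<Sum>L\<in>(\<Union>i\<in>{1..4}. if 0 < v i then {p i} else {}). (\<Sum>j\<in>{1..4}. if p j = L then v j else 0)^2))
     (int (\<Sum>L\<in>(\<Union>i\<in>{1..4}. if 0 < v i then {p i} else {}). (\<Sum>j\<in>{1..4}. if p j = L then v j else 0)^3))
     ((\<exists>i j k l. is_ordering4 i j k l \<and> p i = p j \<and> p j \<noteq> p k \<and> p j \<noteq> p l \<and> p k \<noteq> p l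
              \<and> v i \<ge> 1 \<and> v j \<ge> 1 \<and> v k = 1 \<and> v i + v j = v l)
        \<or> (\<exists>i j k l. is_ordering4 i j k l \<and> v i = 0 \<and> p j \<noteq> p k \<and> p j \<noteq> p l \<and> p k \<noteq> p l
              \<and> v j = 1 \<and> v k = v l \<and> v k \<ge> 1))
     ((p 1 \<noteq> p 2 \<and> p 1 \<noteq> p 3 \<and> p 1 \<noteq> p 4 \<and> p 2 \<noteq> p 3 \<and> p 2 \<noteq> p 4 \<and> p 3 \<noteq> p 4
              \<and> v 1 = 1 \<and> v 2 = 1 \<and> v 3 = 1 \<and> v 4 = 1)
        \<or> (\<exists>i j k l. is_ordering4 i j k l \<and> p i = p j \<and> p j \<noteq> p k \<and> p j \<noteq> p l \<and> p k \<noteq> p l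
              \<and> v i = 1 \<and> v j = 1 \<and> v k = 2 \<and> v l = 2)
        \<or> (\<exists>i j k l. is_ordering4 i j k l \<and> v i = 0 \<and> p j \<noteq> p k \<and> p j \<noteq> p l \<and> p k \<noteq> p l
              \<and> v j = 2 \<and> v k = 2 \<and> v l = 2))"
        by (rule leaf_dd) (use F P dd st0 st1 st2 st3 in simp_all)
      thus ?thesis by blast
    qed
  qed
qed

lemma pattern_obt:
  fixes v :: "nat \<Rightarrow> nat" and p :: "nat \<Rightarrow> 'a"
  assumes stab: "\<And>i. i \<in> {1..4} \<Longrightarrow> 0 < v i \<Longrightarrow> 2 * (\<Sum>j\<in>{1..4}. if p j = p i then v j else 0) < (\<Sum>j\<in>{1..4}. v j)"
    and Vpos: "0 < (\<Sum>j\<in>{1..4}. v j)"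
  obtains a b c d where "BLKP a b c d (int (\<Sum>j\<in>{1..4}. v j))
     (int (\<Sum>L\<in>(\<Union>i\<in>{1..4}. if 0 < v i then {p i} else {}). (\<Sum>j\<in>{1..4}. if p j = L then v j else 0)^2))
     (int (\<Sum>L\<in>(\<Union>i\<in>{1..4}. if 0 < v i then {p i} else {}). (\<Sum>j\<in>{1..4}. if p j = L then v j else 0)^3))
     ((\<exists>i j k l. is_ordering4 i j k l \<and> p i = p j \<and> p j \<noteq> p k \<and> p j \<noteq> p l \<and> p k \<noteq> p l
              \<and> v i \<ge> 1 \<and> v j \<ge> 1 \<and> v k = 1 \<and> v i + v j = v l)
        \<or> (\<exists>i j k l. is_ordering4 i j k l \<and> v i = 0 \<and> p j \<noteq> p k \<and> p j \<noteq> p l \<and> p k \<noteq> p l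
              \<and> v j = 1 \<and> v k = v l \<and> v k \<ge> 1))
     ((p 1 \<noteq> p 2 \<and> p 1 \<noteq> p 3 \<and> p 1 \<noteq> p 4 \<and> p 2 \<noteq> p 3 \<and> p 2 \<noteq> p 4 \<and> p 3 \<noteq> p 4
              \<and> v 1 = 1 \<and> v 2 = 1 \<and> v 3 = 1 \<and> v 4 = 1)
        \<or> (\<exists>i j k l. is_ordering4 i j k l \<and> p i = p j \<and> p j \<noteq> p k \<and> p j \<noteq> p l \<and> p k \<noteq> p l
              \<and> v i = 1 \<and> v j = 1 \<and> v k = 2 \<and> v l = 2)
        \<or> (\<exists>i j k l. is_ordering4 i j k l \<and> v i = 0 \<and> p j \<noteq> p k \<and> p j \<noteq> p l \<and> p k \<noteq> p l
              \<and> v j = 2 \<and> v k = 2 \<and> v l = 2))"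
  using pattern[of v p, OF assms] by blast

lemma czero_in_cline: "czero \<in> cline w"
  unfolding cline_def czero_def by (auto intro: exI[of _ 0])

lemma self_in_cline: "w \<in> cline w"
  unfolding cline_def by (auto intro!: exI[of _ 1])

lemma cline_not_zero: "w \<noteq> czero \<Longrightarrow> cline w \<noteq> {czero}"
  using self_in_cline[of w] by auto

lemma cline_not_univ: "w \<noteq> czero \<Longrightarrow> cline w \<noteq> UNIV"
proof
  assume w: "w \<noteq> czero" and U: "cline w = UNIV"
  show False
  proof (cases "fst w = 0")
    case True
    hence s: "snd w \<noteq> 0" using w unfolding czero_def by (cases w) auto
    have "(1, 0) \<in> cline w" using U by simp
    then obtain c where "(1::complex, 0::complex) = (c * fst w, c * snd w)" unfolding cline_def by auto
    thus False using True by simp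
  next
    case False
    have "(0, 1) \<in> cline w" using U by simp
    then obtain c where c: "(0::complex, 1::complex) = (c * fst w, c * snd w)" unfolding cline_def by auto
    hence "c = 0" using False by simp
    thus False using c by simp
  qed
qed

lemma P1_czero: "is_P1_point L \<Longrightarrow> czero \<in> L"
  unfolding is_P1_point_def using czero_in_cline by auto

lemma P1_not_zero: "is_P1_point L \<Longrightarrow> L \<noteq> {czero}"
  unfolding is_P1_point_def using cline_not_zero by auto

lemma P1_not_univ: "is_P1_point L \<Longrightarrow> L \<noteq> UNIV"
  unfolding is_P1_point_def using cline_not_univ by auto

lemma cline_scale: "c \<noteq> 0 \<Longrightarrow> cline (c * fst w, c * snd w) = cline w"
proof -
  assume c: "c \<noteq> 0"
  show ?thesis
  proof
    show "cline (c * fst w, c * snd w) \<subseteq> cline w"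
    proof
      fix x assume "x \<in> cline (c * fst w, c * snd w)"
      then obtain d where d: "x = (d * (c * fst w), d * (c * snd w))" unfolding cline_def by auto
      hence "x = ((d * c) * fst w, (d * c) * snd w)" by (simp add: mult.assoc)
      thus "x \<in> cline w" unfolding cline_def by blast
    qed
    show "cline w \<subseteq> cline (c * fst w, c * snd w)"
    proof
      fix x assume "x \<in> cline w"
      then obtain d where d: "x = (d * fst w, d * snd w)" unfolding cline_def by auto
      have "x = ((d / c) * (c * fst w), (d / c) * (c * snd w))" using c d by (simp add: field_simps)
      hence "x = ((d/c) * fst (c * fst w, c * snd w), (d/c) * snd (c * fst w, c * snd w))" by simp
      thus "x \<in> cline (c * fst w, c * snd w)" unfolding cline_def by blast
    qed
  qed
qed

lemma P1_meet:
  assumes "is_P1_point L" "is_P1_point L'" "x \<in> L" "x \<in> L'" "x \<noteq> czero"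
  shows "L = L'"
proof -
  obtain w where w: "w \<noteq> czero" "L = cline w" using assms(1) unfolding is_P1_point_def by auto
  obtain w' where w': "w' \<noteq> czero" "L' = cline w'" using assms(2) unfolding is_P1_point_def by auto
  obtain c where c: "x = (c * fst w, c * snd w)" using assms(3) w unfolding cline_def by auto
  obtain c' where c': "x = (c' * fst w', c' * snd w')" using assms(4) w' unfolding cline_def by auto
  have "c \<noteq> 0" using c assms(5) unfolding czero_def by auto
  have "c' \<noteq> 0" using c' assms(5) unfolding czero_def by auto
  have "cline w = cline x" using cline_scale[OF \<open>c \<noteq> 0\<close>, of w] c by simp
  moreover have "cline w' = cline x" using cline_scale[OF \<open>c' \<noteq> 0\<close>, of w'] c' by simp
  ultimately show ?thesis using w w' by simp
qed

lemma P1_inter: "is_P1_point L \<Longrightarrow> is_P1_point L' \<Longrightarrow> L \<noteq> L' \<Longrightarrow> L \<inter> L' = {czero}"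
  using P1_meet P1_czero by blast

lemma P1_subset: "is_P1_point L \<Longrightarrow> is_P1_point L' \<Longrightarrow> L \<subseteq> L' \<Longrightarrow> L = L'"
proof -
  assume a: "is_P1_point L" "is_P1_point L'" "L \<subseteq> L'"
  obtain w where w: "w \<noteq> czero" "L = cline w" using a(1) unfolding is_P1_point_def by auto
  show ?thesis using P1_meet[OF a(1,2), of w] self_in_cline[of w] w a(3) by auto
qed

lemma P1_exists: "is_P1_point (cline (1, 0))"
  unfolding is_P1_point_def czero_def by (rule exI[of _ "(1,0)"]) simp

definition D2 :: "nat \<Rightarrow> (nat \<times> nat) set" where "D2 n = {(x,y). x + y \<le> n}"
definition A3 :: "nat \<Rightarrow> (nat \<times> nat \<times> nat) set" where "A3 n = {(x,y,z). x + y + z \<le> n}"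

lemma D2_finite: "finite (D2 n)"
  by (rule finite_subset[of _ "{..n} \<times> {..n}"]) (auto simp: D2_def)

lemma A3_finite: "finite (A3 n)"
  by (rule finite_subset[of _ "{..n} \<times> {..n} \<times> {..n}"]) (auto simp: A3_def)

lemma D2_card: "2 * card (D2 n) = (n+1)*(n+2)"
proof (induction n)
  case 0
  have "D2 0 = {(0,0)}" by (auto simp: D2_def)
  thus ?case by simp
next
  case (Suc n)
  have e: "D2 (Suc n) = D2 n \<union> ((\<lambda>x. (x, Suc n - x)) ` {..Suc n})"
    by (auto simp: D2_def image_iff)
  have dj: "D2 n \<inter> ((\<lambda>x. (x, Suc n - x)) ` {..Suc n}) = {}" by (auto simp: D2_def)
  have inj: "inj_on (\<lambda>x. (x, Suc n - x)) {..Suc n}" by (auto simp: inj_on_def)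
  have "card (D2 (Suc n)) = card (D2 n) + card {..Suc n}"
    unfolding e by (subst card_Un_disjoint) (use D2_finite dj card_image[OF inj] in auto)
  thus ?case using Suc.IH by simp
qed

lemma A3_card: "6 * card (A3 n) = (n+1)*(n+2)*(n+3)"
proof (induction n)
  case 0
  have "A3 0 = {(0,0,0)}" by (auto simp: A3_def)
  thus ?case by simp
next
  case (Suc n)
  let ?f = "\<lambda>(x,y). (x, y, Suc n - x - y)"
  have e: "A3 (Suc n) = A3 n \<union> (?f ` D2 (Suc n))"
  proof
    show "A3 (Suc n) \<subseteq> A3 n \<union> ?f ` D2 (Suc n)"
    proof
      fix w assume w: "w \<in> A3 (Suc n)"
      obtain x y z where xyz: "w = (x,y,z)" by (cases w) auto
      show "w \<in> A3 n \<union> ?f ` D2 (Suc n)"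
      proof (cases "x + y + z \<le> n")
        case True thus ?thesis using xyz by (auto simp: A3_def)
      next
        case False
        hence "x + y + z = Suc n" using w xyz by (auto simp: A3_def)
        hence "w = ?f (x,y)" "(x,y) \<in> D2 (Suc n)" using xyz by (auto simp: D2_def)
        thus ?thesis by blast
      qed
    qed
    show "A3 n \<union> ?f ` D2 (Suc n) \<subseteq> A3 (Suc n)" by (auto simp: A3_def D2_def)
  qed
  have dj: "A3 n \<inter> (?f ` D2 (Suc n)) = {}" by (auto simp: A3_def D2_def)
  have inj: "inj_on ?f (D2 (Suc n))" by (auto simp: inj_on_def)
  have "card (A3 (Suc n)) = card (A3 n) + card (D2 (Suc n))"
    unfolding e by (subst card_Un_disjoint) (use A3_finite D2_finite dj card_image[OF inj] in auto)
  hence "6 * card (A3 (Suc n)) = 6 * card (A3 n) + 3 * (2 * card (D2 (Suc n)))" by simp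
  thus ?case using Suc.IH D2_card[of "Suc n"] by (simp add: algebra_simps)
qed

lemma box_count:
  fixes a1 a2 a3 a4 t :: int
  assumes s: "t - (a1 + a2 + a3 + a4) \<ge> 0"
  shows "finite {(m1,m2,m3). a1 \<le> m1 \<and> a2 \<le> m2 \<and> a3 \<le> m3 \<and> a4 \<le> - m1 - m2 - m3 + t}"
    and "6 * int (card {(m1,m2,m3). a1 \<le> m1 \<and> a2 \<le> m2 \<and> a3 \<le> m3 \<and> a4 \<le> - m1 - m2 - m3 + t})
       = (t - (a1+a2+a3+a4) + 1) * (t - (a1+a2+a3+a4) + 2) * (t - (a1+a2+a3+a4) + 3)"
proof -
  define n where "n = nat (t - (a1 + a2 + a3 + a4))"
  have n: "int n = t - (a1 + a2 + a3 + a4)" using s unfolding n_def by simp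
  let ?g = "\<lambda>(x::nat, y::nat, z::nat). (int x + a1, int y + a2, int z + a3)"
  let ?B = "{(m1,m2,m3). a1 \<le> m1 \<and> a2 \<le> m2 \<and> a3 \<le> m3 \<and> a4 \<le> - m1 - m2 - m3 + t}"
  have e: "?B = ?g ` A3 n"
  proof
    show "?B \<subseteq> ?g ` A3 n"
    proof
      fix m assume m: "m \<in> ?B"
      obtain m1 m2 m3 where mm: "m = (m1,m2,m3)" by (cases m) auto
      have h: "a1 \<le> m1" "a2 \<le> m2" "a3 \<le> m3" "a4 \<le> - m1 - m2 - m3 + t" using m mm by auto
      have "(nat (m1 - a1), nat (m2 - a2), nat (m3 - a3)) \<in> A3 n"
        unfolding A3_def using h n by auto
      moreover have "m = ?g (nat (m1 - a1), nat (m2 - a2), nat (m3 - a3))" using h mm by auto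
      ultimately show "m \<in> ?g ` A3 n" by blast
    qed
    show "?g ` A3 n \<subseteq> ?B" using n by (auto simp: A3_def)
  qed
  have inj: "inj_on ?g (A3 n)" by (auto simp: inj_on_def)
  show "finite ?B" unfolding e using A3_finite by simp
  have "card ?B = card (A3 n)" unfolding e using card_image[OF inj] .
  hence "6 * int (card ?B) = int (6 * card (A3 n))" by simp
  also have "\<dots> = int ((n+1)*(n+2)*(n+3))" using A3_card by simp
  also have "\<dots> = (int n + 1) * (int n + 2) * (int n + 3)" by (simp add: algebra_simps)
  finally show "6 * int (card ?B) = (t - (a1+a2+a3+a4) + 1) * (t - (a1+a2+a3+a4) + 2) * (t - (a1+a2+a3+a4) + 3)"
    using n by simp
qed

lemma poly_coeffs:
  fixes al be ga :: int
  assumes "\<forall>t\<ge>T. al*t^2 + be*t + ga = 0"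
  shows "al = 0" "be = 0" "ga = 0"
proof -
  have h0: "al*T^2 + be*T + ga = 0" and h1: "al*(T+1)^2 + be*(T+1) + ga = 0" and h2: "al*(T+2)^2 + be*(T+2) + ga = 0"
    using assms by auto
  have "2*al = (al*(T+2)^2 + be*(T+2) + ga) - 2*(al*(T+1)^2 + be*(T+1) + ga) + (al*T^2 + be*T + ga)" by algebra
  thus a: "al = 0" using h0 h1 h2 by simp
  have "be = (al*(T+1)^2 + be*(T+1) + ga) - (al*T^2 + be*T + ga) - al*(2*T+1)" by algebra
  thus b: "be = 0" using h0 h1 a by simp
  show "ga = 0" using h0 a b by simp
qed

lemma chern_extract:
  fixes c1 c2 c3 y V Q R :: int and h :: "int \<Rightarrow> int"
  assumes H1: "\<forall>t\<ge>T1. (let a = c1 + 2 * t; b = c2 + c1 * t + t^2 in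
      6 * h t = a^3 - 3 * a * b + 3 * c3 + 6 * (a^2 - 2 * b) + 11 * a + 12)"
    and H2: "\<forall>t\<ge>T2. 6 * h t = 2*((t+y)^3 + 6*(t+y)^2 + 11*(t+y) + 6) + V*(3*(t+y)^2 + 12*(t+y) + 11) + Q*(3*(t+y)+6) + R"
  shows "c1 = 2*y + V" "2*c2 = 2*y^2 + 2*y*V + V^2 - Q" "6*c3 = V^3 - 3*V*Q + 2*R"
proof -
  define al where "al = 3*c1 - 6*y - 3*V"
  define be where "be = 3*c1^2 - 6*c2 + 12*c1 + 22 - (6*y^2 + 24*y + 22 + 6*y*V + 12*V + 3*Q)"
  define ga where "ga = c1^3 - 3*c1*c2 + 3*c3 + 6*c1^2 - 12*c2 + 11*c1 + 12 - (2*y^3 + 12*y^2 + 22*y + 12 + V*(3*y^2+12*y+11) + Q*(3*y+6) + R)"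
  have "\<forall>t\<ge>max T1 T2. al*t^2 + be*t + ga = 0"
  proof (intro allI impI)
    fix t assume t: "max T1 T2 \<le> t"
    have e1: "6 * h t = (c1 + 2*t)^3 - 3*(c1 + 2*t)*(c2 + c1*t + t^2) + 3*c3 + 6*((c1 + 2*t)^2 - 2*(c2 + c1*t + t^2)) + 11*(c1 + 2*t) + 12"
      using H1 t by (auto simp: Let_def)
    have e2: "6 * h t = 2*((t+y)^3 + 6*(t+y)^2 + 11*(t+y) + 6) + V*(3*(t+y)^2 + 12*(t+y) + 11) + Q*(3*(t+y)+6) + R"
      using H2 t by auto
    have "al*t^2 + be*t + ga = ((c1 + 2*t)^3 - 3*(c1 + 2*t)*(c2 + c1*t + t^2) + 3*c3 + 6*((c1 + 2*t)^2 - 2*(c2 + c1*t + t^2)) + 11*(c1 + 2*t) + 12)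
       - (2*((t+y)^3 + 6*(t+y)^2 + 11*(t+y) + 6) + V*(3*(t+y)^2 + 12*(t+y) + 11) + Q*(3*(t+y)+6) + R)"
      unfolding al_def be_def ga_def by algebra
    thus "al*t^2 + be*t + ga = 0" using e1 e2 by simp
  qed
  note z = poly_coeffs[OF this]
  show c1: "c1 = 2*y + V" using z(1) unfolding al_def by simp
  have "3*(2*c2) = 3*(2*y^2 + 2*y*V + V^2 - Q)" using z(2) unfolding be_def c1 by algebra
  thus c2: "2*c2 = 2*y^2 + 2*y*V + V^2 - Q" by simp
  show "6*c3 = V^3 - 3*V*Q + 2*R" using z(3) c2 unfolding ga_def c1 by algebra
qed

definition lam :: "int \<Rightarrow> int \<times> int \<times> int \<Rightarrow> nat \<Rightarrow> int" where
  "lam t m i = pairing m i + (if i = 4 then t else 0)"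

definition Lset :: "(nat \<Rightarrow> nat) \<Rightarrow> (nat \<Rightarrow> vec2 set) \<Rightarrow> vec2 set set" where
  "Lset v p = (\<Union>i\<in>{1..4}. if 0 < v i then {p i} else {})"

lemma S4: "{1..4::nat} = {1,2,3,4}" by auto

lemma td_F: "toric_data F u v p \<Longrightarrow> i \<in> {1..4} \<Longrightarrow>
   F i l = (if l < u i then {czero} else if l < u i + int (v i) then p i else UNIV)"
  unfolding toric_data_def by blast

lemma td_P1: "toric_data F u v p \<Longrightarrow> i \<in> {1..4} \<Longrightarrow> 0 < v i \<Longrightarrow> is_P1_point (p i)"
  unfolding toric_data_def by blast

lemma zero_ne_univ: "{czero} \<noteq> (UNIV :: vec2 set)"
proof
  assume "{czero} = (UNIV :: vec2 set)"
  hence "(1,0) \<in> {czero}" by simp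
  thus False unfolding czero_def by simp
qed

lemma sub_iff:
  assumes td: "toric_data F u v p" and i: "i \<in> {1..4}" and W: "is_P1_point W"
  shows "W \<subseteq> F i l \<longleftrightarrow> u i + int (if p i = W then 0 else v i) \<le> l"
proof -
  note Fi = td_F[OF td i, of l]
  show ?thesis
  proof (cases "l < u i")
    case True
    have "\<not> W \<subseteq> {czero}" using P1_not_zero[OF W] P1_czero[OF W] by auto
    thus ?thesis using True Fi by auto
  next
    case f1: False
    show ?thesis
    proof (cases "l < u i + int (v i)")
      case True
      hence v: "0 < v i" using f1 by simp
      have P: "is_P1_point (p i)" using td_P1[OF td i v] .
      have "W \<subseteq> p i \<longleftrightarrow> p i = W" using P1_subset[OF W P] by auto
      thus ?thesis using True f1 Fi by auto
    next
      case False
      thus ?thesis using f1 Fi by auto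
    qed
  qed
qed

lemma meet_iff:
  assumes td: "toric_data F u v p" and i: "i \<in> {1..4}" and W: "is_P1_point W"
  shows "W \<inter> F i l \<noteq> {czero} \<longleftrightarrow> u i + int (if p i = W then 0 else v i) \<le> l"
proof -
  note Fi = td_F[OF td i, of l]
  show ?thesis
  proof (cases "l < u i")
    case True
    have "W \<inter> {czero} = {czero}" using P1_czero[OF W] by auto
    thus ?thesis using True Fi by auto
  next
    case f1: False
    show ?thesis
    proof (cases "l < u i + int (v i)")
      case True
      hence v: "0 < v i" using f1 by simp
      have P: "is_P1_point (p i)" using td_P1[OF td i v] .
      have "W \<inter> p i \<noteq> {czero} \<longleftrightarrow> p i = W" using P1_inter[OF W P] P1_not_zero[OF W] by auto
      thus ?thesis using True f1 Fi by auto
    next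
      case False
      thus ?thesis using f1 Fi P1_not_zero[OF W] by auto
    qed
  qed
qed

lemma univ_iff:
  assumes td: "toric_data F u v p" and i: "i \<in> {1..4}"
  shows "F i l = UNIV \<longleftrightarrow> u i + int (v i) \<le> l"
proof -
  note Fi = td_F[OF td i, of l]
  show ?thesis
  proof (cases "l < u i")
    case True thus ?thesis using Fi zero_ne_univ by auto
  next
    case f1: False
    show ?thesis
    proof (cases "l < u i + int (v i)")
      case True
      hence v: "0 < v i" using f1 by simp
      have P: "is_P1_point (p i)" using td_P1[OF td i v] .
      thus ?thesis using True f1 Fi P1_not_univ[OF P] by auto
    next
      case False thus ?thesis using f1 Fi by auto
    qed
  qed
qed

lemma czero_in_F:
  assumes td: "toric_data F u v p" and i: "i \<in> {1..4}"
  shows "czero \<in> F i l"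
proof -
  note Fi = td_F[OF td i, of l]
  show ?thesis
  proof (cases "u i \<le> l \<and> l < u i + int (v i)")
    case True
    hence v: "0 < v i" by simp
    show ?thesis using Fi True P1_czero[OF td_P1[OF td i v]] by auto
  next
    case False thus ?thesis using Fi by auto
  qed
qed

lemma Lset_mem: "L \<in> Lset v p \<longleftrightarrow> (\<exists>i\<in>{1..4}. 0 < v i \<and> L = p i)"
  unfolding Lset_def by (auto split: if_splits)

lemma Lset_P1: "toric_data F u v p \<Longrightarrow> L \<in> Lset v p \<Longrightarrow> is_P1_point L"
proof -
  assume td: "toric_data F u v p" and L: "L \<in> Lset v p"
  then obtain i where "i \<in> {1..4}" "0 < v i" "L = p i" unfolding Lset_mem by blast
  thus ?thesis using td_P1[OF td] by blast
qed

lemma Lset_finite: "finite (Lset v p)"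
  unfolding Lset_def by (rule finite_UN_I) auto

lemma F_cls:
  assumes td: "toric_data F u v p" and i: "i \<in> {1..4}"
  shows "F i l \<in> insert {czero} (insert UNIV (Lset v p))"
proof -
  note Fi = td_F[OF td i, of l]
  show ?thesis
  proof (cases "u i \<le> l \<and> l < u i + int (v i)")
    case True
    hence "0 < v i" by simp
    hence "p i \<in> Lset v p" unfolding Lset_mem using i by blast
    thus ?thesis using Fi True by simp
  next
    case False thus ?thesis using Fi by simp
  qed
qed

lemma cls_czero:
  assumes td: "toric_data F u v p" and X: "X \<in> insert {czero} (insert UNIV (Lset v p))"
  shows "czero \<in> X"
proof -
  have "X = {czero} \<or> X = UNIV \<or> X \<in> Lset v p" using X by simp
  thus ?thesis using P1_czero[OF Lset_P1[OF td]] by blast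
qed

lemma cls_inter:
  assumes td: "toric_data F u v p"
    and A: "A \<in> insert {czero} (insert UNIV (Lset v p))" and B: "B \<in> insert {czero} (insert UNIV (Lset v p))"
  shows "A \<inter> B \<in> insert {czero} (insert UNIV (Lset v p))"
proof -
  have a: "czero \<in> A" and b: "czero \<in> B" using cls_czero[OF td] A B by blast+
  show ?thesis
  proof (cases "A = {czero}")
    case True hence "A \<inter> B = {czero}" using b by blast
    thus ?thesis by simp
  next
    case f1: False
    show ?thesis
    proof (cases "B = {czero}")
      case True hence "A \<inter> B = {czero}" using a by blast
      thus ?thesis by simp
    next
      case f2: False
      show ?thesis
      proof (cases "A = UNIV")
        case True thus ?thesis using B by simp
      next
        case f3: False
        show ?thesis
        proof (cases "B = UNIV")
          case True thus ?thesis using A by simp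
        next
          case f4: False
          have AL: "A \<in> Lset v p" using A f1 f3 by simp
          have BL: "B \<in> Lset v p" using B f2 f4 by simp
          show ?thesis
          proof (cases "A = B")
            case True thus ?thesis using AL by simp
          next
            case False
            hence "A \<inter> B = {czero}" using P1_inter[OF Lset_P1[OF td AL] Lset_P1[OF td BL]] by blast
            thus ?thesis by simp
          qed
        qed
      qed
    qed
  qed
qed

lemma dim_identity:
  assumes td: "toric_data F u v p" and X: "X \<in> insert {czero} (insert UNIV (Lset v p))"
  shows "int (cdim X) + int (card (Lset v p)) * (if X = UNIV then 1 else 0)
     = (\<Sum>L\<in>Lset v p. if L \<subseteq> X then 1 else 0) + 2 * (if X = UNIV then 1 else 0)"
proof -
  have Pl: "\<And>L. L \<in> Lset v p \<Longrightarrow> is_P1_point L" using Lset_P1[OF td] .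
  show ?thesis
  proof (cases "X = {czero}")
    case True
    have "\<And>L. L \<in> Lset v p \<Longrightarrow> \<not> L \<subseteq> X" using True P1_not_zero P1_czero Pl by blast
    thus ?thesis using True zero_ne_univ unfolding cdim_def by simp
  next
    case f1: False
    show ?thesis
    proof (cases "X = UNIV")
      case True
      thus ?thesis using f1 unfolding cdim_def by simp
    next
      case False
      hence XL: "X \<in> Lset v p" using X f1 by auto
      have "(\<Sum>L\<in>Lset v p. if L \<subseteq> X then 1 else (0::int)) = (\<Sum>L\<in>Lset v p. if X = L then 1 else 0)"
        by (rule sum.cong) (use P1_subset[OF Pl Pl[OF XL]] in auto)
      also have "\<dots> = 1" using XL Lset_finite by simp
      finally show ?thesis using f1 False unfolding cdim_def by simp
    qed
  qed
qed

definition Xs :: "(nat \<Rightarrow> int \<Rightarrow> vec2 set) \<Rightarrow> int \<Rightarrow> int \<times> int \<times> int \<Rightarrow> vec2 set" where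
  "Xs F t m = (\<Inter>i\<in>{1..4}. F i (lam t m i))"

definition Bx :: "(nat \<Rightarrow> int) \<Rightarrow> int \<Rightarrow> (int \<times> int \<times> int) set" where
  "Bx a t = {m. \<forall>i\<in>{1..4}. a i \<le> lam t m i}"

lemma sd_eq: "sections_dim (twist F t) m = cdim (Xs F t m)"
proof -
  have "(\<Inter>i\<in>{1..4}. twist F t i (pairing m i)) = (\<Inter>i\<in>{1..4}. F i (lam t m i))"
    by (rule INF_cong) (auto simp: twist_def lam_def)
  thus ?thesis unfolding sections_dim_def Xs_def by simp
qed

lemma X_cls:
  assumes td: "toric_data F u v p"
  shows "Xs F t m \<in> insert {czero} (insert UNIV (Lset v p))"
proof -
  have e: "Xs F t m = F 1 (lam t m 1) \<inter> (F 2 (lam t m 2) \<inter> (F 3 (lam t m 3) \<inter> (F 4 (lam t m 4) \<inter> UNIV)))"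
    unfolding Xs_def S4 by (simp only: INT_insert INT_empty)
  have m: "1 \<in> {1..4::nat}" "2 \<in> {1..4::nat}" "3 \<in> {1..4::nat}" "4 \<in> {1..4::nat}" by auto
  show ?thesis unfolding e
    by (intro cls_inter[OF td] F_cls[OF td m(1)] F_cls[OF td m(2)] F_cls[OF td m(3)] F_cls[OF td m(4)]) simp
qed

lemma X_sub:
  assumes td: "toric_data F u v p" and W: "is_P1_point W"
  shows "W \<subseteq> Xs F t m \<longleftrightarrow> (\<forall>i\<in>{1..4}. u i + int (if p i = W then 0 else v i) \<le> lam t m i)"
  unfolding Xs_def using sub_iff[OF td _ W] by blast

lemma X_univ:
  assumes td: "toric_data F u v p"
  shows "Xs F t m = UNIV \<longleftrightarrow> (\<forall>i\<in>{1..4}. u i + int (v i) \<le> lam t m i)"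
proof -
  have "Xs F t m = UNIV \<longleftrightarrow> (\<forall>i\<in>{1..4}. F i (lam t m i) = UNIV)" unfolding Xs_def by blast
  thus ?thesis using univ_iff[OF td] by simp
qed

lemma X_zero:
  assumes td: "toric_data F u v p" and nb: "\<not> (\<forall>i\<in>{1..4}. u i \<le> lam t m i)"
  shows "cdim (Xs F t m) = 0"
proof -
  obtain i where i: "i \<in> {1..4}" "lam t m i < u i" using nb by auto
  have "F i (lam t m i) = {czero}" using td_F[OF td i(1)] i(2) by simp
  hence "Xs F t m \<subseteq> {czero}" unfolding Xs_def using i(1) by blast
  moreover have "czero \<in> Xs F t m" unfolding Xs_def using czero_in_F[OF td] by blast
  ultimately have "Xs F t m = {czero}" by blast
  thus ?thesis unfolding cdim_def by simp
qed

lemma Bx_eq: "Bx a t = {(m1,m2,m3). a 1 \<le> m1 \<and> a 2 \<le> m2 \<and> a 3 \<le> m3 \<and> a 4 \<le> - m1 - m2 - m3 + t}"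
  unfolding Bx_def S4 lam_def pairing_def by auto

lemma Bx_count:
  assumes "t - (\<Sum>i\<in>{1..4}. a i) \<ge> 0"
  shows "finite (Bx a t)" "6 * int (card (Bx a t)) = (t - (\<Sum>i\<in>{1..4}. a i) + 1) * (t - (\<Sum>i\<in>{1..4}. a i) + 2) * (t - (\<Sum>i\<in>{1..4}. a i) + 3)"
proof -
  have s: "(\<Sum>i\<in>{1..4}. a i) = a 1 + a 2 + a 3 + a 4" unfolding S4 by simp
  show "finite (Bx a t)" unfolding Bx_eq using box_count(1)[of t "a 1" "a 2" "a 3" "a 4"] assms s by simp
  show "6 * int (card (Bx a t)) = (t - (\<Sum>i\<in>{1..4}. a i) + 1) * (t - (\<Sum>i\<in>{1..4}. a i) + 2) * (t - (\<Sum>i\<in>{1..4}. a i) + 3)"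
    unfolding Bx_eq s using box_count(2)[of t "a 1" "a 2" "a 3" "a 4"] assms s by simp
qed

lemma sum_ind_card: "finite A \<Longrightarrow> (\<Sum>x\<in>A. if P x then 1 else 0 :: int) = int (card {x\<in>A. P x})"
proof -
  assume f: "finite A"
  have "(\<Sum>x\<in>A. if P x then 1 else 0 :: int) = (\<Sum>x\<in>{x\<in>A. P x}. 1)"
    using sum.inter_filter[OF f, of "\<lambda>_. 1::int" P] by simp
  thus ?thesis by simp
qed

lemma sum_VL:
  assumes td: "toric_data F u v p"
  shows "(\<Sum>L\<in>Lset v p. \<Sum>j\<in>{1..4}. if p j = L then v j else 0) = (\<Sum>j\<in>{1..4::nat}. v j)"
proof -
  have "(\<Sum>L\<in>Lset v p. \<Sum>j\<in>{1..4}. if p j = L then v j else 0) = (\<Sum>j\<in>{1..4}. \<Sum>L\<in>Lset v p. if p j = L then v j else 0)"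
    by (rule sum.swap)
  also have "\<dots> = (\<Sum>j\<in>{1..4::nat}. v j)"
  proof (rule sum.cong[OF refl])
    fix j assume j: "j \<in> {1..4::nat}"
    have "(\<Sum>L\<in>Lset v p. if p j = L then v j else 0) = (if p j \<in> Lset v p then v j else 0)"
      using Lset_finite by (simp add: sum.delta)
    also have "\<dots> = v j"
    proof (cases "0 < v j")
      case True hence "p j \<in> Lset v p" unfolding Lset_mem using j by blast
      thus ?thesis by simp
    next
      case False thus ?thesis by simp
    qed
    finally show "(\<Sum>L\<in>Lset v p. if p j = L then v j else 0) = v j" .
  qed
  finally show ?thesis .
qed

lemma E_shift: fixes z x :: int shows
  "(z+x+1)*(z+x+2)*(z+x+3) = (z+1)*(z+2)*(z+3) + x*(3*z^2+12*z+11) + x^2*(3*z+6) + x^3"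
  by algebra

lemma h0_formula:
  assumes td: "toric_data F u v p"
    and tbig: "t \<ge> (\<Sum>i\<in>{1..4}. u i) + int (\<Sum>i\<in>{1..4}. v i)"
  shows "6 * int (hilbert F t) =
    2*((t - (\<Sum>i\<in>{1..4}. u i) - int (\<Sum>i\<in>{1..4}. v i)+1)*(t - (\<Sum>i\<in>{1..4}. u i) - int (\<Sum>i\<in>{1..4}. v i)+2)*(t - (\<Sum>i\<in>{1..4}. u i) - int (\<Sum>i\<in>{1..4}. v i)+3))
    + int (\<Sum>i\<in>{1..4}. v i) * (3*(t - (\<Sum>i\<in>{1..4}. u i) - int (\<Sum>i\<in>{1..4}. v i))^2 + 12*(t - (\<Sum>i\<in>{1..4}. u i) - int (\<Sum>i\<in>{1..4}. v i)) + 11)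
    + int (\<Sum>L\<in>Lset v p. (\<Sum>j\<in>{1..4}. if p j = L then v j else 0)^2) * (3*(t - (\<Sum>i\<in>{1..4}. u i) - int (\<Sum>i\<in>{1..4}. v i)) + 6)
    + int (\<Sum>L\<in>Lset v p. (\<Sum>j\<in>{1..4}. if p j = L then v j else 0)^3)"
proof -
  define U where "U = (\<Sum>i\<in>{1..4}. u i)"
  define V where "V = (\<Sum>i\<in>{1..4::nat}. v i)"
  define VL where "VL = (\<lambda>L. \<Sum>j\<in>{1..4::nat}. if p j = L then v j else 0)"
  define Ls where "Ls = Lset v p"
  define z where "z = t - U - int V"
  define E where "E = (\<lambda>x::int. (x+1)*(x+2)*(x+3))"
  define n where "n = int (card Ls)"
  define B where "B = Bx u t"
  define X where "X = Xs F t"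
  have z0: "z \<ge> 0" using tbig unfolding z_def U_def V_def by simp
  have finB: "finite B" unfolding B_def by (rule Bx_count(1)) (use z0 z_def U_def in simp)
  have finL: "finite Ls" unfolding Ls_def by (rule Lset_finite)
  have h1: "hilbert F t = (\<Sum>m\<in>B. cdim (X m))"
  proof -
    have "hilbert F t = (\<Sum>m\<in>{m. sections_dim (twist F t) m \<noteq> 0}. sections_dim (twist F t) m)"
      unfolding hilbert_def h0_def ..
    also have "\<dots> = (\<Sum>m\<in>B. sections_dim (twist F t) m)"
    proof (rule sum.mono_neutral_left[OF finB])
      show "{m. sections_dim (twist F t) m \<noteq> 0} \<subseteq> B"
      proof
        fix m assume "m \<in> {m. sections_dim (twist F t) m \<noteq> 0}"
        hence "cdim (Xs F t m) \<noteq> 0" unfolding sd_eq by simp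
        hence "\<forall>i\<in>{1..4}. u i \<le> lam t m i" using X_zero[OF td, of t m] by auto
        thus "m \<in> B" unfolding B_def Bx_def by simp
      qed
      show "\<forall>i\<in>B - {m. sections_dim (twist F t) m \<noteq> 0}. sections_dim (twist F t) i = 0" by simp
    qed
    finally show ?thesis unfolding sd_eq X_def .
  qed
  have key: "\<And>m. int (cdim (X m)) + n * (if X m = UNIV then 1 else 0)
     = (\<Sum>L\<in>Ls. if L \<subseteq> X m then 1 else 0) + 2 * (if X m = UNIV then 1 else 0)"
    unfolding n_def Ls_def X_def by (rule dim_identity[OF td X_cls[OF td]])
  have "(\<Sum>m\<in>B. int (cdim (X m)) + n * (if X m = UNIV then 1 else 0))
      = (\<Sum>m\<in>B. (\<Sum>L\<in>Ls. if L \<subseteq> X m then 1 else 0) + 2 * (if X m = UNIV then 1 else 0))"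
    using key by simp
  hence s2: "int (hilbert F t) + n * (\<Sum>m\<in>B. if X m = UNIV then 1 else 0)
      = (\<Sum>L\<in>Ls. \<Sum>m\<in>B. if L \<subseteq> X m then 1 else 0) + 2 * (\<Sum>m\<in>B. if X m = UNIV then 1 else 0)"
    unfolding h1 sum.distrib of_nat_sum sum_distrib_left[symmetric] by (simp add: sum.swap[of _ B Ls])
  define aU where "aU = (\<lambda>i. u i + int (v i))"
  define aL where "aL = (\<lambda>L i. u i + int (if p i = L then 0 else v i))"
  have sU: "(\<Sum>i\<in>{1..4}. aU i) = U + int V" unfolding aU_def U_def V_def by (simp add: sum.distrib)
  have sL: "(\<Sum>i\<in>{1..4}. aL L i) = U + int V - int (VL L)" for L
  proof -
    have "V = (\<Sum>i\<in>{1..4::nat}. (if p i = L then 0 else v i)) + VL L"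
      unfolding V_def VL_def sum.distrib[symmetric] by (rule sum.cong) auto
    hence "int V = (\<Sum>i\<in>{1..4::nat}. int (if p i = L then 0 else v i)) + int (VL L)"
      by simp
    thus ?thesis unfolding aL_def U_def by (simp add: sum.distrib)
  qed
  have cU: "(\<Sum>m\<in>B. if X m = UNIV then 1 else 0) = int (card (Bx aU t))"
  proof -
    have "{m\<in>B. X m = UNIV} = Bx aU t"
    proof (rule set_eqI)
      fix m
      have "X m = UNIV \<longleftrightarrow> (\<forall>i\<in>{1..4}. aU i \<le> lam t m i)" unfolding X_def aU_def using X_univ[OF td] .
      moreover have "(\<forall>i\<in>{1..4}. aU i \<le> lam t m i) \<Longrightarrow> m \<in> B"
      proof -
        assume h: "\<forall>i\<in>{1..4}. aU i \<le> lam t m i"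
        have "\<forall>i\<in>{1..4}. u i \<le> lam t m i"
        proof
          fix i assume "i \<in> {1..4::nat}"
          hence "u i + int (v i) \<le> lam t m i" using h unfolding aU_def by blast
          thus "u i \<le> lam t m i" by simp
        qed
        thus "m \<in> B" unfolding B_def Bx_def by simp
      qed
      ultimately show "m \<in> {m\<in>B. X m = UNIV} \<longleftrightarrow> m \<in> Bx aU t" unfolding Bx_def by blast
    qed
    thus ?thesis using sum_ind_card[OF finB] by simp
  qed
  have cL: "(\<Sum>m\<in>B. if L \<subseteq> X m then 1 else 0) = int (card (Bx (aL L) t))" if L: "L \<in> Ls" for L
  proof -
    have P: "is_P1_point L" using Lset_P1[OF td] L unfolding Ls_def by blast
    have "{m\<in>B. L \<subseteq> X m} = Bx (aL L) t"
    proof (rule set_eqI)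
      fix m
      have "L \<subseteq> X m \<longleftrightarrow> (\<forall>i\<in>{1..4}. aL L i \<le> lam t m i)" unfolding X_def aL_def using X_sub[OF td P] .
      moreover have "(\<forall>i\<in>{1..4}. aL L i \<le> lam t m i) \<Longrightarrow> m \<in> B"
      proof -
        assume h: "\<forall>i\<in>{1..4}. aL L i \<le> lam t m i"
        have "\<forall>i\<in>{1..4}. u i \<le> lam t m i"
        proof
          fix i assume "i \<in> {1..4::nat}"
          hence "u i + int (if p i = L then 0 else v i) \<le> lam t m i" using h unfolding aL_def by blast
          thus "u i \<le> lam t m i" by (simp split: if_splits)
        qed
        thus "m \<in> B" unfolding B_def Bx_def by simp
      qed
      ultimately show "m \<in> {m\<in>B. L \<subseteq> X m} \<longleftrightarrow> m \<in> Bx (aL L) t" unfolding Bx_def by blast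
    qed
    thus ?thesis using sum_ind_card[OF finB] by simp
  qed
  have VLle: "VL L \<le> V" for L unfolding VL_def V_def by (rule sum_mono) auto
  have eU: "6 * int (card (Bx aU t)) = E z"
    using Bx_count(2)[of t aU] z0 unfolding sU E_def z_def by (simp add: algebra_simps)
  have eL: "6 * int (card (Bx (aL L) t)) = E (z + int (VL L))" for L
    using Bx_count(2)[of t "aL L"] z0 VLle[of L] unfolding sL E_def z_def by (simp add: algebra_simps)
  have "6 * int (hilbert F t) + n * E z = (\<Sum>L\<in>Ls. E (z + int (VL L))) + 2 * E z"
  proof -
    have "6 * (int (hilbert F t) + n * (\<Sum>m\<in>B. if X m = UNIV then 1 else 0))
       = 6 * ((\<Sum>L\<in>Ls. \<Sum>m\<in>B. if L \<subseteq> X m then 1 else 0) + 2 * (\<Sum>m\<in>B. if X m = UNIV then 1 else 0))"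
      using s2 by simp
    also have "(\<Sum>L\<in>Ls. \<Sum>m\<in>B. if L \<subseteq> X m then 1 else 0) = (\<Sum>L\<in>Ls. int (card (Bx (aL L) t)))"
      using cL by (rule sum.cong[OF refl])
    finally have "6 * int (hilbert F t) + n * (6 * int (card (Bx aU t)))
       = (\<Sum>L\<in>Ls. 6 * int (card (Bx (aL L) t))) + 2 * (6 * int (card (Bx aU t)))"
      unfolding cU by (simp add: algebra_simps sum_distrib_left)
    thus ?thesis unfolding eU eL .
  qed
  moreover have "(\<Sum>L\<in>Ls. E (z + int (VL L))) = n * E z + int V * (3*z^2+12*z+11)
      + int (\<Sum>L\<in>Ls. VL L ^ 2) * (3*z+6) + int (\<Sum>L\<in>Ls. VL L ^ 3)"
  proof -
    have "(\<Sum>L\<in>Ls. E (z + int (VL L))) = (\<Sum>L\<in>Ls. E z + int (VL L) * (3*z^2+12*z+11) + int (VL L)^2*(3*z+6) + int (VL L)^3)"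
      unfolding E_def using E_shift by simp
    also have "\<dots> = n * E z + int (\<Sum>L\<in>Ls. VL L) * (3*z^2+12*z+11) + int (\<Sum>L\<in>Ls. VL L ^ 2) * (3*z+6) + int (\<Sum>L\<in>Ls. VL L ^ 3)"
      unfolding n_def sum.distrib of_nat_sum sum_distrib_right[symmetric] by simp
    also have "(\<Sum>L\<in>Ls. VL L) = V" unfolding Ls_def VL_def V_def by (rule sum_VL[OF td])
    finally show ?thesis .
  qed
  ultimately have "6 * int (hilbert F t) = 2 * E z + int V * (3*z^2+12*z+11)
      + int (\<Sum>L\<in>Ls. VL L ^ 2) * (3*z+6) + int (\<Sum>L\<in>Ls. VL L ^ 3)" by simp
  thus ?thesis unfolding E_def z_def U_def V_def Ls_def VL_def by simp
qed

lemma least_eq: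
  assumes td: "toric_data F u v p" and i: "i \<in> {1..4}" and W: "is_P1_point W"
  shows "(LEAST l. W \<inter> F i l \<noteq> {czero}) = u i + int (if p i = W then 0 else v i)"
  by (rule Least_equality) (simp_all add: meet_iff[OF td i W])

theorem proposition3p8:
  fixes V :: "nat \<Rightarrow> int \<Rightarrow> vec2 set" and u :: "nat \<Rightarrow> int" and v :: "nat \<Rightarrow> nat"
    and p :: "nat \<Rightarrow> vec2 set" and c1 c2 c3 :: int
  assumes "klyachko_filtrations V"
    and "mu_stable V"
    and "has_chern_classes V c1 c2 c3"
    and "toric_data V u v p"
  shows "even (c3 - c1 * c2)
    \<and> (c1 \<in> {-1, 0} \<longrightarrow> c2 > 0)
    \<and> (c1 = -1 \<longrightarrow> 0 \<le> c3 \<and> c3 \<le> c2^2)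
    \<and> (c1 = 0 \<longrightarrow> 0 \<le> c3 \<and> c3 \<le> c2^2 - c2 + 2)
    \<and> (c1 = -1 \<longrightarrow> (c3 = c2^2 \<longleftrightarrow>
          (\<exists>i j k l. is_ordering4 i j k l \<and> p i = p j \<and> p j \<noteq> p k \<and> p j \<noteq> p l \<and> p k \<noteq> p l
              \<and> v i \<ge> 1 \<and> v j \<ge> 1 \<and> v k = 1 \<and> v i + v j = v l)
        \<or> (\<exists>i j k l. is_ordering4 i j k l \<and> v i = 0 \<and> p j \<noteq> p k \<and> p j \<noteq> p l \<and> p k \<noteq> p l
              \<and> v j = 1 \<and> v k = v l \<and> v k \<ge> 1)))
    \<and> (c1 = 0 \<longrightarrow> (c3 = c2^2 - c2 + 2 \<longleftrightarrow>
          (p 1 \<noteq> p 2 \<and> p 1 \<noteq> p 3 \<and> p 1 \<noteq> p 4 \<and> p 2 \<noteq> p 3 \<and> p 2 \<noteq> p 4 \<and> p 3 \<noteq> p 4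
              \<and> v 1 = 1 \<and> v 2 = 1 \<and> v 3 = 1 \<and> v 4 = 1)
        \<or> (\<exists>i j k l. is_ordering4 i j k l \<and> p i = p j \<and> p j \<noteq> p k \<and> p j \<noteq> p l \<and> p k \<noteq> p l
              \<and> v i = 1 \<and> v j = 1 \<and> v k = 2 \<and> v l = 2)
        \<or> (\<exists>i j k l. is_ordering4 i j k l \<and> v i = 0 \<and> p j \<noteq> p k \<and> p j \<noteq> p l \<and> p k \<noteq> p l
              \<and> v j = 2 \<and> v k = 2 \<and> v l = 2)))"
proof -
  note td = assms(4)
  define U where "U = (\<Sum>i\<in>{1..4}. u i)"
  define Vs where "Vs = (\<Sum>i\<in>{1..4::nat}. v i)"
  define Q where "Q = int (\<Sum>L\<in>Lset v p. (\<Sum>j\<in>{1..4}. if p j = L then v j else 0)^2)"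
  define R where "R = int (\<Sum>L\<in>Lset v p. (\<Sum>j\<in>{1..4}. if p j = L then v j else 0)^3)"
  define y where "y = - U - int Vs"
  obtain T1 where H1: "\<forall>t\<ge>T1. (let a = c1 + 2 * t; b = c2 + c1 * t + t^2 in
      6 * int (hilbert V t) = a^3 - 3 * a * b + 3 * c3 + 6 * (a^2 - 2 * b) + 11 * a + 12)"
    using assms(3) unfolding has_chern_classes_def by blast
  have H2: "\<forall>t\<ge>U + int Vs. 6 * int (hilbert V t) = 2*((t+y)^3 + 6*(t+y)^2 + 11*(t+y) + 6) + int Vs*(3*(t+y)^2 + 12*(t+y) + 11) + Q*(3*(t+y)+6) + R"
  proof (intro allI impI)
    fix t assume t: "U + int Vs \<le> t"
    have h: "6 * int (hilbert V t) = 2*((t - U - int Vs+1)*(t - U - int Vs+2)*(t - U - int Vs+3))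
      + int Vs * (3*(t - U - int Vs)^2 + 12*(t - U - int Vs) + 11) + Q * (3*(t - U - int Vs) + 6) + R"
      using h0_formula[OF td, of t] t unfolding U_def Vs_def Q_def R_def by simp
    have e: "t + y = t - U - int Vs" unfolding y_def by simp
    show "6 * int (hilbert V t) = 2*((t+y)^3 + 6*(t+y)^2 + 11*(t+y) + 6) + int Vs*(3*(t+y)^2 + 12*(t+y) + 11) + Q*(3*(t+y)+6) + R"
      unfolding e h by algebra
  qed
  note CE = chern_extract[OF H1 H2]
  have stabW: "2 * (\<Sum>j\<in>{1..4}. if p j = W then v j else 0) < Vs" if W: "is_P1_point W" for W
  proof -
    have lt: "2 * sub_c1 V W < c1" using assms(2) W assms(3) unfolding mu_stable_def by blast
    have "sub_c1 V W = - (\<Sum>i\<in>{1..4}. u i + int (if p i = W then 0 else v i))"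
      unfolding sub_c1_def using least_eq[OF td _ W] by simp
    moreover have "Vs = (\<Sum>i\<in>{1..4::nat}. (if p i = W then 0 else v i)) + (\<Sum>j\<in>{1..4}. if p j = W then v j else 0)"
      unfolding Vs_def sum.distrib[symmetric] by (rule sum.cong) auto
    ultimately have "sub_c1 V W = - (U + int Vs - int (\<Sum>j\<in>{1..4}. if p j = W then v j else 0))"
      unfolding U_def by (simp add: sum.distrib)
    hence "2 * int (\<Sum>j\<in>{1..4}. if p j = W then v j else 0) < int Vs" using lt CE(1) unfolding y_def by (simp add: algebra_simps)
    thus ?thesis by linarith
  qed
  have Vpos: "0 < (\<Sum>j\<in>{1..4::nat}. v j)" using stabW[OF P1_exists] unfolding Vs_def by linarith
  have stab: "2 * (\<Sum>j\<in>{1..4}. if p j = p i then v j else 0) < (\<Sum>j\<in>{1..4::nat}. v j)"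
    if i: "i \<in> {1..4}" and vi: "0 < v i" for i
    using stabW[OF td_P1[OF td i vi]] unfolding Vs_def .
  obtain a b c d where BL: "BLKP a b c d (int (\<Sum>j\<in>{1..4}. v j))
     (int (\<Sum>L\<in>(\<Union>i\<in>{1..4}. if 0 < v i then {p i} else {}). (\<Sum>j\<in>{1..4}. if p j = L then v j else 0)^2))
     (int (\<Sum>L\<in>(\<Union>i\<in>{1..4}. if 0 < v i then {p i} else {}). (\<Sum>j\<in>{1..4}. if p j = L then v j else 0)^3))
     ((\<exists>i j k l. is_ordering4 i j k l \<and> p i = p j \<and> p j \<noteq> p k \<and> p j \<noteq> p l \<and> p k \<noteq> p l
              \<and> v i \<ge> 1 \<and> v j \<ge> 1 \<and> v k = 1 \<and> v i + v j = v l)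
        \<or> (\<exists>i j k l. is_ordering4 i j k l \<and> v i = 0 \<and> p j \<noteq> p k \<and> p j \<noteq> p l \<and> p k \<noteq> p l
              \<and> v j = 1 \<and> v k = v l \<and> v k \<ge> 1))
     ((p 1 \<noteq> p 2 \<and> p 1 \<noteq> p 3 \<and> p 1 \<noteq> p 4 \<and> p 2 \<noteq> p 3 \<and> p 2 \<noteq> p 4 \<and> p 3 \<noteq> p 4
              \<and> v 1 = 1 \<and> v 2 = 1 \<and> v 3 = 1 \<and> v 4 = 1)
        \<or> (\<exists>i j k l. is_ordering4 i j k l \<and> p i = p j \<and> p j \<noteq> p k \<and> p j \<noteq> p l \<and> p k \<noteq> p l
              \<and> v i = 1 \<and> v j = 1 \<and> v k = 2 \<and> v l = 2)
        \<or> (\<exists>i j k l. is_ordering4 i j k l \<and> v i = 0 \<and> p j \<noteq> p k \<and> p j \<noteq> p l \<and> p k \<noteq> p l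
              \<and> v j = 2 \<and> v k = 2 \<and> v l = 2))"
    by (rule pattern_obt[of v p, OF stab Vpos]) blast+
  note B = BLKP_D[OF BL[unfolded Lset_def[symmetric], folded Vs_def Q_def R_def]]
  have BF: "even (c3 - c1 * c2)
    \<and> (c1 \<in> {-1, 0} \<longrightarrow> c2 > 0)
    \<and> (c1 = -1 \<longrightarrow> 0 \<le> c3 \<and> c3 \<le> c2^2)
    \<and> (c1 = 0 \<longrightarrow> 0 \<le> c3 \<and> c3 \<le> c2^2 - c2 + 2)
    \<and> (c1 = -1 \<longrightarrow> (c3 = c2^2 \<longleftrightarrow> d = 0 \<and> ((a=1 \<and> b=c) \<or> (b=1 \<and> a=c) \<or> (c=1 \<and> a=b))))
    \<and> (c1 = 0 \<longrightarrow> (c3 = c2^2 - c2 + 2 \<longleftrightarrow> (a=1 \<and> b=1 \<and> c=1 \<and> d=1) \<or> (d = 0 \<and> a=2 \<and> b=2 \<and> c=2)))"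
  proof (rule block_final)
    show "a \<ge> 1" "b \<ge> 1" "c \<ge> 1" "d \<ge> 0" "2*a < a+b+c+d" "2*b < a+b+c+d" "2*c < a+b+c+d" "2*d < a+b+c+d"
      by (rule B)+
    have vv: "int Vs = a+b+c+d" and qq: "Q = a^2+b^2+c^2+d^2" and rr: "R = a^3+b^3+c^3+d^3" by (rule B)+
    show "c1 = 2*y + (a+b+c+d)" using CE(1) vv by simp
    show "2*c2 = 2*y^2 + 2*y*(a+b+c+d) + (a+b+c+d)^2 - (a^2+b^2+c^2+d^2)" using CE(2) vv qq by simp
    show "6*c3 = (a+b+c+d)^3 - 3*(a+b+c+d)*(a^2+b^2+c^2+d^2) + 2*(a^3+b^3+c^3+d^3)" using CE(3) vv qq rr by simp
  qed
  have o: "((\<exists>i j k l. is_ordering4 i j k l \<and> p i = p j \<and> p j \<noteq> p k \<and> p j \<noteq> p l \<and> p k \<noteq> p l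
              \<and> v i \<ge> 1 \<and> v j \<ge> 1 \<and> v k = 1 \<and> v i + v j = v l)
        \<or> (\<exists>i j k l. is_ordering4 i j k l \<and> v i = 0 \<and> p j \<noteq> p k \<and> p j \<noteq> p l \<and> p k \<noteq> p l
              \<and> v j = 1 \<and> v k = v l \<and> v k \<ge> 1)) \<longleftrightarrow> d = 0 \<and> ((a=1 \<and> b=c) \<or> (b=1 \<and> a=c) \<or> (c=1 \<and> a=b))"
    by (rule B)
  have e: "((p 1 \<noteq> p 2 \<and> p 1 \<noteq> p 3 \<and> p 1 \<noteq> p 4 \<and> p 2 \<noteq> p 3 \<and> p 2 \<noteq> p 4 \<and> p 3 \<noteq> p 4
              \<and> v 1 = 1 \<and> v 2 = 1 \<and> v 3 = 1 \<and> v 4 = 1)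
        \<or> (\<exists>i j k l. is_ordering4 i j k l \<and> p i = p j \<and> p j \<noteq> p k \<and> p j \<noteq> p l \<and> p k \<noteq> p l
              \<and> v i = 1 \<and> v j = 1 \<and> v k = 2 \<and> v l = 2)
        \<or> (\<exists>i j k l. is_ordering4 i j k l \<and> v i = 0 \<and> p j \<noteq> p k \<and> p j \<noteq> p l \<and> p k \<noteq> p l
              \<and> v j = 2 \<and> v k = 2 \<and> v l = 2)) \<longleftrightarrow> (a=1 \<and> b=1 \<and> c=1 \<and> d=1) \<or> (d = 0 \<and> a=2 \<and> b=2 \<and> c=2)"
    by (rule B)
  show ?thesis unfolding o e by (rule BF)
qed

end
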